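(* Let the outage probability of energy harvesting decode-and-forward cooperation with a randomly chosen relay be $$\mathcal{P}=\mathcal{P}(N=0,\ x_0<\epsilon)+\mathcal{P}(N\ge 1)\,\mathcal{P}\big(x_0+\eta y_i(x_i-\epsilon)<\epsilon,\ x_i>\epsilon\,\big|\,N\ge1\big)+\mathcal{P}\big(x_0<\epsilon,\ x_i<\epsilon,\ N\ge1\big),$$ where, when $N\ge 1$, $i$ is a relay chosen uniformly at random among the $N$ relays. Then $$\mathcal{P}=\big(1-e^{-(1+d^\alpha)\epsilon}\big)e^{-\pi R_{\mathcal D}^2\lambda}+\frac{1-e^{-\pi R_{\mathcal D}^2\lambda}}{\pi R_{\mathcal D}^2}\int_0^{\epsilon}\int_0^{R_{\mathcal D}}\int_0^{2\pi}e^{-(1+r^\alpha)\epsilon}\Big(1-2q(r,\theta)\,K_1\big(2q(r,\theta)\big)\Big)\,r\,d\theta\,dr\,f_{x_0}(x_0)\,dx_0$$ $$+\frac{2\big(1-e^{-\pi R_{\mathcal D}^2\lambda}\big)}{R_{\mathcal D}^2}\int_0^{R_{\mathcal D}}\big(1-e^{-(1+d^\alpha)\epsilon}\big)\big(1-e^{-(1+r^\alpha)\epsilon}\big)\,r\,dr,$$ where $f_{x_0}(x_0)=(1+d^\alpha)e^{-(1+d^\alpha)x_0}$ is the density of $x_0$, $K_1$ is the modified Bessel function of the second kind of order one, and $$q(r,\theta)=\sqrt{\frac{\big(1+(r^2+d^2-2rd\cos\theta)^{\alpha/2}\big)(1+r^\alpha)(\epsilon-x_0)}{\eta}}.$$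
   Context: System model: a source is at the origin and a destination is at distance $d>0$ from it; polar angles $\theta$ are measured from the source–destination direction. Relays are the points of a homogeneous Poisson point process of intensity $\lambda>0$ restricted to the disc $\mathcal D$ of radius $R_{\mathcal D}>0$ centred at the source, so the number $N$ of relays is Poisson with mean $\pi R_{\mathcal D}^2\lambda$ and, given $N$, the relays are i.i.d. uniform in $\mathcal D$. Path-loss exponent $\alpha>0$ (bounded model: path loss $1+\text{distance}^\alpha$). Fading coefficients $h_d$ (source–destination), $h_i$ (source–relay $i$), $g_i$ (relay $i$–destination) are mutually independent circularly symmetric complex Gaussian $\mathcal{CN}(0,1)$, independent of relay locations. $d_i$ is the source–relay-$i$ distance and $c_i$ the relay-$i$–destination distance, $c_i^2=d_i^2+d^2-2d_id\cos\theta_i$. Define $x_0=|h_d|^2/(1+d^\alpha)$, $x_i=|h_i|^2/(1+d_i^\alpha)$, $y_i=|g_i|^2/(1+c_i^\alpha)$. Transmit power $P>0$, target rate $R>0$, $\tau=2^{2R}-1$, $\epsilon=\tau/P$, energy harvesting efficiency $\eta\in(0,1]$. A relay decodes iff $x_i>\epsilon$ and then transmits with harvested power $\eta(Px_i-\tau)$, so the destination SNR after combining is $P\big(x_0+\eta y_i(x_i-\epsilon)\big)$; outage occurs when this SNR is below $\tau$. *)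

theory Defs
  imports "HOL-Probability.Probability"
begin

text \<open>Modified Bessel function of the second kind of order one, via its standard
integral representation K_1(z) = int_0^infinity exp(-z cosh t) cosh t dt  (z > 0).\<close>
definition bessel_K1 :: "real \<Rightarrow> real" where
  "bessel_K1 z = (LINT t:{0..}|lborel. exp (- z * cosh t) * cosh t)"

definition CN01 :: "complex measure" where
  "CN01 = density lborel (\<lambda>z. ennreal (exp (- (cmod z)\<^sup>2) / pi))"

text \<open>Uniform distribution on the disc of radius R centred at the source (origin);
points of the plane are represented as complex numbers, the destination lies at d on the real axis.\<close>
definition unif_disc :: "real \<Rightarrow> complex measure" where
  "unif_disc R = uniform_measure lborel (cball 0 R)"

text \<open>Joint law of (N, V, relay positions, h_d, (h_k)_k, (g_k)_k): N Poisson with mean mu,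
V uniform on [0,1) (used to pick the relay index uniformly among the N relays),
relay positions i.i.d. uniform on the disc, all fading coefficients i.i.d. CN(0,1),
everything mutually independent.\<close>
definition relay_model :: "real \<Rightarrow> real \<Rightarrow>
    (nat \<times> real \<times> (nat \<Rightarrow> complex) \<times> complex \<times> (nat \<Rightarrow> complex) \<times> (nat \<Rightarrow> complex)) measure" where
  "relay_model mu R =
     measure_pmf (poisson_pmf mu) \<Otimes>\<^sub>M
     (uniform_measure lborel {0..<1::real} \<Otimes>\<^sub>M
     ((\<Pi>\<^sub>M k\<in>(UNIV::nat set). unif_disc R) \<Otimes>\<^sub>M
     (CN01 \<Otimes>\<^sub>M
     ((\<Pi>\<^sub>M k\<in>(UNIV::nat set). CN01) \<Otimes>\<^sub>M
      (\<Pi>\<^sub>M k\<in>(UNIV::nat set). CN01)))))"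

end

theory Submission
  imports Defs
begin

lemma nn_sub_twoE:
  fixes f :: "real \<Rightarrow> ennreal" and g g' :: "real \<Rightarrow> real"
  assumes Mf[measurable]: "f \<in> borel_measurable borel"
  assumes derivg: "\<And>x. (g has_real_derivative g' x) (at x)"
  assumes contg': "continuous_on UNIV g'"
  assumes g'0: "\<And>x. g' x \<ge> 0"
  shows "(\<integral>\<^sup>+x. f x * indicator (\<Union>n::nat. {g (- real (Suc n))..g (real (Suc n))}) x \<partial>lborel) =
         (\<integral>\<^sup>+x. f (g x) * g' x \<partial>lborel)"
proof -
  have mono: "g x \<le> g y" if "x \<le> y" for x y
    using deriv_nonneg_imp_mono[of x y g g'] derivg g'0 that by auto
  have Mg[measurable]: "g \<in> borel_measurable borel"
    using derivg by (intro borel_measurable_continuous_onI continuous_at_imp_continuous_on) (auto intro: DERIV_isCont)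
  have Mg'[measurable]: "g' \<in> borel_measurable borel"
    using contg' by (intro borel_measurable_continuous_onI) auto
  have eqn: "(\<integral>\<^sup>+x. f x * indicator {g (- real (Suc n))..g (real (Suc n))} x \<partial>lborel) =
         (\<integral>\<^sup>+x. f (g x) * g' x * indicator {- real (Suc n)..real (Suc n)} x \<partial>lborel)" for n
    by (rule nn_integral_substitution_aux) (auto intro: derivg continuous_on_subset[OF contg'] g'0)
  let ?D1 = "density lborel f"
  let ?D2 = "density lborel (\<lambda>x. f (g x) * ennreal (g' x))"
  have inc1: "incseq (\<lambda>n::nat. {g (- real (Suc n))..g (real (Suc n))})"
    by (auto simp: incseq_def intro: order_trans[OF mono] order_trans[OF _ mono])
  have inc2: "incseq (\<lambda>n::nat. {- real (Suc n)..real (Suc n)})"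
    by (auto simp: incseq_def)
  have "(\<integral>\<^sup>+x. f x * indicator (\<Union>n::nat. {g (- real (Suc n))..g (real (Suc n))}) x \<partial>lborel)
      = emeasure ?D1 (\<Union>n::nat. {g (- real (Suc n))..g (real (Suc n))})"
    by (subst emeasure_density) (auto intro!: nn_integral_cong split: split_indicator)
  also have "\<dots> = (SUP n. emeasure ?D1 {g (- real (Suc n))..g (real (Suc n))})"
    by (rule SUP_emeasure_incseq[symmetric]) (use inc1 in auto)
  also have "\<dots> = (SUP n. emeasure ?D2 {- real (Suc n)..real (Suc n)})"
  proof (rule SUP_cong)
    fix n :: nat
    have "emeasure ?D1 {g (- real (Suc n))..g (real (Suc n))} = (\<integral>\<^sup>+x. f x * indicator {g (- real (Suc n))..g (real (Suc n))} x \<partial>lborel)"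
      by (subst emeasure_density) (auto intro!: nn_integral_cong split: split_indicator)
    also have "\<dots> = (\<integral>\<^sup>+x. f (g x) * g' x * indicator {- real (Suc n)..real (Suc n)} x \<partial>lborel)" by (rule eqn)
    also have "\<dots> = emeasure ?D2 {- real (Suc n)..real (Suc n)}"
      by (subst emeasure_density) (auto intro!: nn_integral_cong split: split_indicator)
    finally show "emeasure ?D1 {g (- real (Suc n))..g (real (Suc n))} = emeasure ?D2 {- real (Suc n)..real (Suc n)}" .
  qed simp
  also have "\<dots> = emeasure ?D2 (\<Union>n::nat. {- real (Suc n)..real (Suc n)})"
    by (rule SUP_emeasure_incseq) (use inc2 in auto)
  also have "(\<Union>n::nat. {- real (Suc n)..real (Suc n)}) = UNIV"
  proof -
    have "x \<in> (\<Union>n::nat. {- real (Suc n)..real (Suc n)})" for x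
    proof -
      obtain n :: nat where "\<bar>x\<bar> \<le> real n" using real_arch_simple by blast
      then have "- real (Suc n) \<le> x \<and> x \<le> real (Suc n)" by (auto simp: abs_le_iff)
      then show ?thesis by (simp only: UN_iff atLeastAtMost_iff) (rule bexI[of _ n], auto)
    qed
    then show ?thesis by auto
  qed
  also have "emeasure ?D2 UNIV = (\<integral>\<^sup>+x. f (g x) * g' x \<partial>lborel)"
    by (subst emeasure_density) auto
  finally show ?thesis .
qed

lemma arctan_union: "(\<Union>n::nat. {arctan (- real (Suc n))..arctan (real (Suc n))}) = {-pi/2<..<pi/2}"
proof (rule set_eqI, rule iffI)
  fix x assume "x \<in> (\<Union>n::nat. {arctan (- real (Suc n))..arctan (real (Suc n))})"
  then have "\<exists>n::nat. x \<in> {arctan (- real (Suc n))..arctan (real (Suc n))}"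
    by (simp only: UN_iff) (metis UNIV_I)
  then obtain n :: nat where "arctan (- real (Suc n)) \<le> x" "x \<le> arctan (real (Suc n))"
    by (simp only: atLeastAtMost_iff) (metis)
  moreover have "- (pi/2) < arctan (- real (Suc n))" "arctan (real (Suc n)) < pi/2"
    using arctan_bounded apply blast using arctan_bounded by blast
  ultimately show "x \<in> {-pi/2<..<pi/2}" by simp
next
  fix x :: real assume x: "x \<in> {-pi/2<..<pi/2}"
  then have at: "arctan (tan x) = x" by (intro arctan_tan) auto
  obtain n :: nat where "\<bar>tan x\<bar> \<le> real n" using real_arch_simple by blast
  then have "- real (Suc n) \<le> tan x \<and> tan x \<le> real (Suc n)" by linarith
  then have "arctan (- real (Suc n)) \<le> arctan (tan x) \<and> arctan (tan x) \<le> arctan (real (Suc n))"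
    by (simp only: arctan_le_iff)
  then show "x \<in> (\<Union>n::nat. {arctan (- real (Suc n))..arctan (real (Suc n))})"
    unfolding at by (simp only: UN_iff atLeastAtMost_iff) (metis UNIV_I)
qed

lemma nn_arctan_sub:
  fixes f :: "real \<Rightarrow> ennreal"
  assumes [measurable]: "f \<in> borel_measurable borel"
  shows "(\<integral>\<^sup>+x. f x * indicator {-pi/2<..<pi/2} x \<partial>lborel) = (\<integral>\<^sup>+t. f (arctan t) * ennreal (1 / (1 + t\<^sup>2)) \<partial>lborel)"
proof -
  have "(\<integral>\<^sup>+x. f x * indicator (\<Union>n::nat. {arctan (- real (Suc n))..arctan (real (Suc n))}) x \<partial>lborel) = (\<integral>\<^sup>+t. f (arctan t) * ennreal (1 / (1 + t\<^sup>2)) \<partial>lborel)"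
  proof (rule nn_sub_twoE)
    show "(arctan has_real_derivative 1 / (1 + x\<^sup>2)) (at x)" for x
      using DERIV_arctan[of x] by (simp add: divide_inverse)
    show "continuous_on UNIV (\<lambda>x::real. 1 / (1 + x\<^sup>2))"
      by (intro continuous_intros) (metis add_pos_nonneg zero_less_one zero_le_power2 less_numeral_extra(3))
  qed auto
  then show ?thesis by (simp only: arctan_union)
qed

thm lborel_pair.Fubini' nn_integral_real_affine measurable_Pair_compose_split
lemma polar_right:
  fixes F :: "real \<Rightarrow> real \<Rightarrow> ennreal"
  assumes MF[measurable]: "(\<lambda>(x, y). F x y) \<in> borel_measurable (borel \<Otimes>\<^sub>M borel)"
  shows "(\<integral>\<^sup>+x. indicator {0<..} x * (\<integral>\<^sup>+y. F x y \<partial>lborel) \<partial>lborel) =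
         (\<integral>\<^sup>+r. indicator {0<..} r * ennreal r *
             (\<integral>\<^sup>+\<theta>. indicator {-pi/2<..<pi/2} \<theta> * F (r * cos \<theta>) (r * sin \<theta>) \<partial>lborel) \<partial>lborel)"
proof -
  define c where "c t = 1 / sqrt (1 + t\<^sup>2)" for t :: real
  have c_pos: "c t > 0" for t unfolding c_def by (simp add: add_pos_nonneg)
  have c2: "c t * c t = 1 / (1 + t\<^sup>2)" for t
    unfolding c_def by (simp add: add_pos_nonneg) 
  have [measurable]: "c \<in> borel_measurable borel" unfolding c_def by measurable
  have S1: "indicator {0<..} x * (\<integral>\<^sup>+y. F x y \<partial>lborel) =
            (\<integral>\<^sup>+t. indicator {0<..} x * ennreal x * F x (x * t) \<partial>lborel)" for x
  proof (cases "x > 0")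
    case True
    have "(\<integral>\<^sup>+y. F x y \<partial>lborel) = ennreal \<bar>x\<bar> * (\<integral>\<^sup>+t. F x (0 + x * t) \<partial>lborel)"
      by (rule nn_integral_real_affine) (use True in auto)
    then show ?thesis using True by (simp add: nn_integral_cmult)
  qed simp
  have "(\<integral>\<^sup>+x. indicator {0<..} x * (\<integral>\<^sup>+y. F x y \<partial>lborel) \<partial>lborel) =
        (\<integral>\<^sup>+x. \<integral>\<^sup>+t. indicator {0<..} x * ennreal x * F x (x * t) \<partial>lborel \<partial>lborel)"
    by (simp only: S1)
  also have "\<dots> = (\<integral>\<^sup>+t. \<integral>\<^sup>+x. indicator {0<..} x * ennreal x * F x (x * t) \<partial>lborel \<partial>lborel)"
    by (rule lborel_pair.Fubini') measurable
  also have "\<dots> = (\<integral>\<^sup>+t. \<integral>\<^sup>+r. indicator {0<..} r * ennreal r * (ennreal (1 / (1 + t\<^sup>2)) * F (r * c t) (r * c t * t)) \<partial>lborel \<partial>lborel)"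
  proof (rule nn_integral_cong)
    fix t :: real
    have "(\<integral>\<^sup>+x. indicator {0<..} x * ennreal x * F x (x * t) \<partial>lborel) =
          ennreal \<bar>c t\<bar> * (\<integral>\<^sup>+r. indicator {0<..} (0 + c t * r) * ennreal (0 + c t * r) * F (0 + c t * r) ((0 + c t * r) * t) \<partial>lborel)"
      by (rule nn_integral_real_affine) (use c_pos[of t] in auto)
    also have "\<dots> = (\<integral>\<^sup>+r. indicator {0<..} r * ennreal r * (ennreal (1 / (1 + t\<^sup>2)) * F (r * c t) (r * c t * t)) \<partial>lborel)"
      using c_pos[of t]
      by (subst nn_integral_cmult[symmetric]) 
         (auto intro!: nn_integral_cong simp: c2[symmetric] ennreal_mult less_imp_le zero_less_mult_iff
               mult_ac split: split_indicator)
    finally show "(\<integral>\<^sup>+x. indicator {0<..} x * ennreal x * F x (x * t) \<partial>lborel) = \<dots>" .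
  qed
  also have "\<dots> = (\<integral>\<^sup>+r. \<integral>\<^sup>+t. indicator {0<..} r * ennreal r * (ennreal (1 / (1 + t\<^sup>2)) * F (r * c t) (r * c t * t)) \<partial>lborel \<partial>lborel)"
    by (rule lborel_pair.Fubini') measurable
  also have "\<dots> = (\<integral>\<^sup>+r. indicator {0<..} r * ennreal r *
             (\<integral>\<^sup>+\<theta>. indicator {-pi/2<..<pi/2} \<theta> * F (r * cos \<theta>) (r * sin \<theta>) \<partial>lborel) \<partial>lborel)"
  proof (rule nn_integral_cong)
    fix r :: real
    have "(\<integral>\<^sup>+\<theta>. indicator {-pi/2<..<pi/2} \<theta> * F (r * cos \<theta>) (r * sin \<theta>) \<partial>lborel)
       = (\<integral>\<^sup>+\<theta>. F (r * cos \<theta>) (r * sin \<theta>) * indicator {-pi/2<..<pi/2} \<theta> \<partial>lborel)"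
      by (simp add: mult.commute)
    also have "\<dots> = (\<integral>\<^sup>+t. F (r * cos (arctan t)) (r * sin (arctan t)) * ennreal (1 / (1 + t\<^sup>2)) \<partial>lborel)"
      by (rule nn_arctan_sub) measurable
    also have "\<dots> = (\<integral>\<^sup>+t. ennreal (1 / (1 + t\<^sup>2)) * F (r * c t) (r * c t * t) \<partial>lborel)"
      by (auto simp: cos_arctan sin_arctan c_def mult.commute intro!: nn_integral_cong)
    finally show "(\<integral>\<^sup>+t. indicator {0<..} r * ennreal r * (ennreal (1 / (1 + t\<^sup>2)) * F (r * c t) (r * c t * t)) \<partial>lborel) = indicator {0<..} r * ennreal r *
             (\<integral>\<^sup>+\<theta>. indicator {-pi/2<..<pi/2} \<theta> * F (r * cos \<theta>) (r * sin \<theta>) \<partial>lborel)"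
      by (simp add: nn_integral_cmult)
  qed
  finally show ?thesis .
qed

lemma nn_shift:
  fixes f :: "real \<Rightarrow> ennreal"
  assumes [measurable]: "f \<in> borel_measurable borel"
  shows "(\<integral>\<^sup>+\<theta>. indicator {a<..<b} \<theta> * f (\<theta> + s) \<partial>lborel) = (\<integral>\<^sup>+\<phi>. indicator {a+s<..<b+s} \<phi> * f \<phi> \<partial>lborel)"
proof -
  have "(\<integral>\<^sup>+\<phi>. indicator {a+s<..<b+s} \<phi> * f \<phi> \<partial>lborel) = ennreal \<bar>1\<bar> * (\<integral>\<^sup>+\<theta>. indicator {a+s<..<b+s} (s + 1 * \<theta>) * f (s + 1 * \<theta>) \<partial>lborel)"
    by (rule nn_integral_real_affine) auto
  also have "\<dots> = (\<integral>\<^sup>+\<theta>. indicator {a<..<b} \<theta> * f (\<theta> + s) \<partial>lborel)"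
    by (auto intro!: nn_integral_cong split: split_indicator simp: add.commute)
  finally show ?thesis ..
qed

lemma nn_reflect:
  fixes f :: "real \<Rightarrow> ennreal"
  assumes [measurable]: "f \<in> borel_measurable borel"
  shows "(\<integral>\<^sup>+x. f x \<partial>lborel) = (\<integral>\<^sup>+x. f (- x) \<partial>lborel)"
  using nn_integral_real_affine[of f "-1" 0] by simp

lemma nn_split0:
  fixes f :: "real \<Rightarrow> ennreal"
  assumes [measurable]: "f \<in> borel_measurable borel"
  shows "(\<integral>\<^sup>+x. f x \<partial>lborel) = (\<integral>\<^sup>+x. indicator {0<..} x * f x \<partial>lborel) + (\<integral>\<^sup>+x. indicator {0<..} x * f (- x) \<partial>lborel)"
proof -
  have "(\<integral>\<^sup>+x. f x \<partial>lborel) = (\<integral>\<^sup>+x. indicator {0<..} x * f x + indicator {..<0} x * f x \<partial>lborel)"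
    by (rule nn_integral_cong_AE) (use AE_lborel_singleton[of 0] in \<open>auto split: split_indicator\<close>)
  also have "\<dots> = (\<integral>\<^sup>+x. indicator {0<..} x * f x \<partial>lborel) + (\<integral>\<^sup>+x. indicator {..<0} x * f x \<partial>lborel)"
    by (rule nn_integral_add) auto
  also have "(\<integral>\<^sup>+x. indicator {..<0} x * f x \<partial>lborel) = (\<integral>\<^sup>+x. indicator {..<0} (- x) * f (- x) \<partial>lborel)"
    by (rule nn_reflect) auto
  also have "\<dots> = (\<integral>\<^sup>+x. indicator {0<..} x * f (- x) \<partial>lborel)"
    by (auto intro!: nn_integral_cong split: split_indicator)
  finally show ?thesis .
qed

lemma cos_sin_3pi2: "cos (3*pi/2) = 0" "sin (3*pi/2) = -1"
proof -
  have e: "3*pi/2 = pi/2 + pi" by simp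
  show "cos (3*pi/2) = 0" "sin (3*pi/2) = -1" unfolding e by (simp_all only: cos_periodic_pi sin_periodic_pi cos_pi_half sin_pi_half)
qed

lemma polar_plane:
  fixes F :: "real \<Rightarrow> real \<Rightarrow> ennreal"
  assumes MF[measurable]: "(\<lambda>(x, y). F x y) \<in> borel_measurable (borel \<Otimes>\<^sub>M borel)"
  shows "(\<integral>\<^sup>+x. (\<integral>\<^sup>+y. F x y \<partial>lborel) \<partial>lborel) =
         (\<integral>\<^sup>+r. indicator {0<..} r * ennreal r *
             (\<integral>\<^sup>+\<theta>. indicator {0..2*pi} \<theta> * F (r * cos \<theta>) (r * sin \<theta>) \<partial>lborel) \<partial>lborel)"
proof -
  let ?K = "\<lambda>r \<theta>. F (r * cos \<theta>) (r * sin \<theta>)"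
  have "(\<integral>\<^sup>+x. (\<integral>\<^sup>+y. F x y \<partial>lborel) \<partial>lborel) = (\<integral>\<^sup>+y. (\<integral>\<^sup>+x. F x y \<partial>lborel) \<partial>lborel)"
    by (rule lborel_pair.Fubini') measurable
  also have "\<dots> = (\<integral>\<^sup>+y. indicator {0<..} y * (\<integral>\<^sup>+x. F x y \<partial>lborel) \<partial>lborel) + (\<integral>\<^sup>+y. indicator {0<..} y * (\<integral>\<^sup>+x. F x (- y) \<partial>lborel) \<partial>lborel)"
    by (rule nn_split0) measurable
  also have "(\<integral>\<^sup>+y. indicator {0<..} y * (\<integral>\<^sup>+x. F x y \<partial>lborel) \<partial>lborel) = (\<integral>\<^sup>+u. indicator {0<..} u * (\<integral>\<^sup>+v. F (- v) u \<partial>lborel) \<partial>lborel)"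
    by (subst nn_reflect) (auto intro!: nn_integral_cong)
  also have "\<dots> = (\<integral>\<^sup>+r. indicator {0<..} r * ennreal r *
             (\<integral>\<^sup>+\<theta>. indicator {-pi/2<..<pi/2} \<theta> * F (- (r * sin \<theta>)) (r * cos \<theta>) \<partial>lborel) \<partial>lborel)"
    by (rule polar_right) measurable
  also have "\<dots> = (\<integral>\<^sup>+r. indicator {0<..} r * ennreal r *
             (\<integral>\<^sup>+\<phi>. indicator {0<..<pi} \<phi> * ?K r \<phi> \<partial>lborel) \<partial>lborel)"
  proof (rule nn_integral_cong, rule arg_cong[where f="\<lambda>z. _ * z"])
    fix r :: real
    have "(\<integral>\<^sup>+\<theta>. indicator {-pi/2<..<pi/2} \<theta> * F (- (r * sin \<theta>)) (r * cos \<theta>) \<partial>lborel)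
        = (\<integral>\<^sup>+\<theta>. indicator {-pi/2<..<pi/2} \<theta> * ?K r (\<theta> + pi/2) \<partial>lborel)"
      by (auto simp: cos_add sin_add intro!: nn_integral_cong)
    also have "\<dots> = (\<integral>\<^sup>+\<phi>. indicator {-pi/2+pi/2<..<pi/2+pi/2} \<phi> * ?K r \<phi> \<partial>lborel)"
      by (rule nn_shift) measurable
    finally show "(\<integral>\<^sup>+\<theta>. indicator {-pi/2<..<pi/2} \<theta> * F (- (r * sin \<theta>)) (r * cos \<theta>) \<partial>lborel) =
       (\<integral>\<^sup>+\<phi>. indicator {0<..<pi} \<phi> * ?K r \<phi> \<partial>lborel)" by simp
  qed
  also have "(\<integral>\<^sup>+y. indicator {0<..} y * (\<integral>\<^sup>+x. F x (- y) \<partial>lborel) \<partial>lborel) = 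
          (\<integral>\<^sup>+r. indicator {0<..} r * ennreal r *
             (\<integral>\<^sup>+\<theta>. indicator {-pi/2<..<pi/2} \<theta> * F (r * sin \<theta>) (- (r * cos \<theta>)) \<partial>lborel) \<partial>lborel)"
    by (rule polar_right[where F="\<lambda>u v. F v (- u)"]) measurable
  also have "\<dots> = (\<integral>\<^sup>+r. indicator {0<..} r * ennreal r *
             (\<integral>\<^sup>+\<phi>. indicator {pi<..<2*pi} \<phi> * ?K r \<phi> \<partial>lborel) \<partial>lborel)"
  proof (rule nn_integral_cong, rule arg_cong[where f="\<lambda>z. _ * z"])
    fix r :: real
    have "(\<integral>\<^sup>+\<theta>. indicator {-pi/2<..<pi/2} \<theta> * F (r * sin \<theta>) (- (r * cos \<theta>)) \<partial>lborel)
        = (\<integral>\<^sup>+\<theta>. indicator {-pi/2<..<pi/2} \<theta> * ?K r (\<theta> + 3*pi/2) \<partial>lborel)"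
      by (auto simp: cos_add sin_add cos_sin_3pi2 intro!: nn_integral_cong)
    also have "\<dots> = (\<integral>\<^sup>+\<phi>. indicator {-pi/2+3*pi/2<..<pi/2+3*pi/2} \<phi> * ?K r \<phi> \<partial>lborel)"
      by (rule nn_shift) measurable
    finally show "(\<integral>\<^sup>+\<theta>. indicator {-pi/2<..<pi/2} \<theta> * F (r * sin \<theta>) (- (r * cos \<theta>)) \<partial>lborel) =
       (\<integral>\<^sup>+\<phi>. indicator {pi<..<2*pi} \<phi> * ?K r \<phi> \<partial>lborel)" by simp
  qed
  also have "(\<integral>\<^sup>+r. indicator {0<..} r * ennreal r * (\<integral>\<^sup>+\<phi>. indicator {0<..<pi} \<phi> * ?K r \<phi> \<partial>lborel) \<partial>lborel) +
             (\<integral>\<^sup>+r. indicator {0<..} r * ennreal r * (\<integral>\<^sup>+\<phi>. indicator {pi<..<2*pi} \<phi> * ?K r \<phi> \<partial>lborel) \<partial>lborel)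
           = (\<integral>\<^sup>+r. indicator {0<..} r * ennreal r * (\<integral>\<^sup>+\<phi>. indicator {0<..<pi} \<phi> * ?K r \<phi> \<partial>lborel) +
                    indicator {0<..} r * ennreal r * (\<integral>\<^sup>+\<phi>. indicator {pi<..<2*pi} \<phi> * ?K r \<phi> \<partial>lborel) \<partial>lborel)"
    by (rule nn_integral_add[symmetric]) measurable
  also have "\<dots> = (\<integral>\<^sup>+r. indicator {0<..} r * ennreal r *
             (\<integral>\<^sup>+\<theta>. indicator {0..2*pi} \<theta> * ?K r \<theta> \<partial>lborel) \<partial>lborel)"
  proof (intro nn_integral_cong)
    fix r :: real
    have "(\<integral>\<^sup>+\<phi>. indicator {0<..<pi} \<phi> * ?K r \<phi> \<partial>lborel) + (\<integral>\<^sup>+\<phi>. indicator {pi<..<2*pi} \<phi> * ?K r \<phi> \<partial>lborel)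
      = (\<integral>\<^sup>+\<phi>. indicator {0<..<pi} \<phi> * ?K r \<phi> + indicator {pi<..<2*pi} \<phi> * ?K r \<phi> \<partial>lborel)"
      by (rule nn_integral_add[symmetric]) measurable
    also have "\<dots> = (\<integral>\<^sup>+\<theta>. indicator {0..2*pi} \<theta> * ?K r \<theta> \<partial>lborel)"
    proof (rule nn_integral_cong_AE)
      have "AE \<theta> in lborel. \<theta> \<noteq> 0 \<and> \<theta> \<noteq> pi \<and> \<theta> \<noteq> 2*pi"
        using AE_lborel_singleton[of 0] AE_lborel_singleton[of pi] AE_lborel_singleton[of "2*pi"] by eventually_elim auto
      then show "AE \<theta> in lborel. indicator {0<..<pi} \<theta> * ?K r \<theta> + indicator {pi<..<2*pi} \<theta> * ?K r \<theta> = indicator {0..2*pi} \<theta> * ?K r \<theta>"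
        by eventually_elim (auto split: split_indicator)
    qed
    finally show "indicator {0<..} r * ennreal r * (\<integral>\<^sup>+\<phi>. indicator {0<..<pi} \<phi> * ?K r \<phi> \<partial>lborel) +
                    indicator {0<..} r * ennreal r * (\<integral>\<^sup>+\<phi>. indicator {pi<..<2*pi} \<phi> * ?K r \<phi> \<partial>lborel) =
          indicator {0<..} r * ennreal r * (\<integral>\<^sup>+\<theta>. indicator {0..2*pi} \<theta> * ?K r \<theta> \<partial>lborel)"
      by (simp only: distrib_left[symmetric])
  qed
  finally show ?thesis .
qed

lemma Complex_fun_eq: "Complex = (\<lambda>x y. complex_of_real x + complex_of_real y * \<i>)"
  by (auto simp: fun_eq_iff Complex_eq)

lemma measurable_Complex[measurable]:
  "(\<lambda>x. Complex (f x) (g x)) \<in> borel_measurable M"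
  if [measurable]: "f \<in> borel_measurable M" "g \<in> borel_measurable M"
  unfolding Complex_fun_eq by measurable

lemma complex_fubini:
  fixes F :: "complex \<Rightarrow> ennreal"
  assumes [measurable]: "F \<in> borel_measurable borel"
  shows "(\<integral>\<^sup>+z. F z \<partial>lborel) = (\<integral>\<^sup>+x. \<integral>\<^sup>+y. F (Complex x y) \<partial>lborel \<partial>lborel)"
proof -
  interpret P: product_sigma_finite "\<lambda>_::complex. lborel :: real measure"
    by unfold_locales
  have ne: "(1::complex) \<noteq> \<i>" by (simp add: complex_eq_iff)
  have "(\<integral>\<^sup>+z. F z \<partial>lborel) = (\<integral>\<^sup>+f. F (\<Sum>b\<in>Basis. f b *\<^sub>R b) \<partial>(\<Pi>\<^sub>M b\<in>Basis. lborel))"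
    by (subst lborel_eq) (simp add: nn_integral_distr)
  also have "\<dots> = (\<integral>\<^sup>+f. F (f 1 *\<^sub>R 1 + f \<i> *\<^sub>R \<i>) \<partial>(\<Pi>\<^sub>M b\<in>insert 1 {\<i>}. lborel))"
    using ne by (simp add: Basis_complex_def)
  also have "\<dots> = (\<integral>\<^sup>+y. \<integral>\<^sup>+x. F ((x(1:=y)) 1 *\<^sub>R 1 + (x(1:=y)) \<i> *\<^sub>R \<i>) \<partial>(\<Pi>\<^sub>M b\<in>{\<i>}. lborel) \<partial>lborel)"
    by (rule P.product_nn_integral_insert_rev) (use ne in auto)
  also have "\<dots> = (\<integral>\<^sup>+y. \<integral>\<^sup>+x. F (Complex y (x \<i>)) \<partial>(\<Pi>\<^sub>M b\<in>{\<i>}. lborel) \<partial>lborel)"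
    using ne by (auto intro!: nn_integral_cong arg_cong[where f=F] simp: complex_eq_iff)
  also have "\<dots> = (\<integral>\<^sup>+y. \<integral>\<^sup>+t. F (Complex y t) \<partial>lborel \<partial>lborel)"
    by (intro nn_integral_cong P.product_nn_integral_singleton) auto
  finally show ?thesis .
qed

lemma polar_complex:
  fixes F :: "complex \<Rightarrow> ennreal"
  assumes [measurable]: "F \<in> borel_measurable borel"
  shows "(\<integral>\<^sup>+z. F z \<partial>lborel) = (\<integral>\<^sup>+r. indicator {0<..} r * ennreal r *
             (\<integral>\<^sup>+\<theta>. indicator {0..2*pi} \<theta> * F (Complex (r * cos \<theta>) (r * sin \<theta>)) \<partial>lborel) \<partial>lborel)"
  by (subst complex_fubini) (auto intro!: polar_plane)

lemma nn_sub_oneE: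
  fixes f :: "real \<Rightarrow> ennreal" and g g' :: "real \<Rightarrow> real"
  assumes Mf[measurable]: "f \<in> borel_measurable borel"
  assumes derivg: "\<And>x. x \<ge> a \<Longrightarrow> (g has_real_derivative g' x) (at x)"
  assumes contg': "continuous_on {a..} g'"
  assumes g'0: "\<And>x. x \<ge> a \<Longrightarrow> g' x \<ge> 0"
  assumes Mg[measurable]: "g \<in> borel_measurable borel" and Mg'[measurable]: "g' \<in> borel_measurable borel"
  shows "(\<integral>\<^sup>+x. f x * indicator (\<Union>n::nat. {g a..g (a + real (Suc n))}) x \<partial>lborel) =
         (\<integral>\<^sup>+x. f (g x) * g' x * indicator {a..} x \<partial>lborel)"
proof -
  have mono: "g x \<le> g y" if "a \<le> x" "x \<le> y" for x y
    using deriv_nonneg_imp_mono[of x y g g'] derivg g'0 that by auto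
  have eqn: "(\<integral>\<^sup>+x. f x * indicator {g a..g (a + real (Suc n))} x \<partial>lborel) =
         (\<integral>\<^sup>+x. f (g x) * g' x * indicator {a..a + real (Suc n)} x \<partial>lborel)" for n
    by (rule nn_integral_substitution_aux) (auto intro: derivg continuous_on_subset[OF contg'] g'0)
  let ?D1 = "density lborel f"
  let ?D2 = "density lborel (\<lambda>x. f (g x) * ennreal (g' x))"
  have inc1: "incseq (\<lambda>n::nat. {g a..g (a + real (Suc n))})"
    by (auto simp: incseq_def intro: order_trans[OF _ mono])
  have inc2: "incseq (\<lambda>n::nat. {a..a + real (Suc n)})"
    by (auto simp: incseq_def)
  have "(\<integral>\<^sup>+x. f x * indicator (\<Union>n::nat. {g a..g (a + real (Suc n))}) x \<partial>lborel)
      = emeasure ?D1 (\<Union>n::nat. {g a..g (a + real (Suc n))})"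
    by (subst emeasure_density) (auto intro!: nn_integral_cong split: split_indicator)
  also have "\<dots> = (SUP n. emeasure ?D1 {g a..g (a + real (Suc n))})"
    by (rule SUP_emeasure_incseq[symmetric]) (use inc1 in auto)
  also have "\<dots> = (SUP n. emeasure ?D2 {a..a + real (Suc n)})"
  proof (rule SUP_cong)
    fix n :: nat
    have "emeasure ?D1 {g a..g (a + real (Suc n))} = (\<integral>\<^sup>+x. f x * indicator {g a..g (a + real (Suc n))} x \<partial>lborel)"
      by (subst emeasure_density) (auto intro!: nn_integral_cong split: split_indicator)
    also have "\<dots> = (\<integral>\<^sup>+x. f (g x) * g' x * indicator {a..a + real (Suc n)} x \<partial>lborel)" by (rule eqn)
    also have "\<dots> = emeasure ?D2 {a..a + real (Suc n)}"
      by (subst emeasure_density) (auto intro!: nn_integral_cong split: split_indicator)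
    finally show "emeasure ?D1 {g a..g (a + real (Suc n))} = emeasure ?D2 {a..a + real (Suc n)}" .
  qed simp
  also have "\<dots> = emeasure ?D2 (\<Union>n::nat. {a..a + real (Suc n)})"
    by (rule SUP_emeasure_incseq) (use inc2 in auto)
  also have "(\<Union>n::nat. {a..a + real (Suc n)}) = {a..}"
  proof -
    have "x \<in> (\<Union>n::nat. {a..a + real (Suc n)})" if "x \<ge> a" for x
    proof -
      obtain n :: nat where "x - a \<le> real n" using real_arch_simple by blast
      then have "a \<le> x \<and> x \<le> a + real (Suc n)" using that by auto
      then show ?thesis by (simp only: UN_iff atLeastAtMost_iff) (rule bexI[of _ n], auto)
    qed
    then show ?thesis by auto
  qed
  also have "emeasure ?D2 {a..} = (\<integral>\<^sup>+x. f (g x) * g' x * indicator {a..} x \<partial>lborel)"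
    by (subst emeasure_density) (auto intro!: nn_integral_cong split: split_indicator)
  finally show ?thesis .
qed

lemma sq_union: "(\<Union>n::nat. {(0::real)\<^sup>2..(0 + real (Suc n))\<^sup>2}) = {0..}"
proof -
  have "x \<in> (\<Union>n::nat. {(0::real)\<^sup>2..(0 + real (Suc n))\<^sup>2})" if "x \<ge> 0" for x
  proof -
    obtain n :: nat where "x \<le> real n" using real_arch_simple by blast
    moreover have "real (Suc n) \<le> (real (Suc n))\<^sup>2" by (rule self_le_power) auto
    ultimately have "x \<le> (real (Suc n))\<^sup>2" by simp
    then have "0\<^sup>2 \<le> x \<and> x \<le> (0 + real (Suc n))\<^sup>2" using that by auto
    then show ?thesis by (simp only: UN_iff atLeastAtMost_iff) (rule bexI[of _ n], auto)
  qed
  then show ?thesis by auto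
qed

lemma CN_radial:
  fixes f :: "real \<Rightarrow> ennreal"
  assumes [measurable]: "f \<in> borel_measurable borel"
  shows "(\<integral>\<^sup>+z. f ((cmod z)\<^sup>2) \<partial>CN01) = (\<integral>\<^sup>+s. f s * ennreal (exp (- s)) * indicator {0..} s \<partial>lborel)"
proof -
  have "(\<integral>\<^sup>+z. f ((cmod z)\<^sup>2) \<partial>CN01) = (\<integral>\<^sup>+z. ennreal (exp (- (cmod z)\<^sup>2) / pi) * f ((cmod z)\<^sup>2) \<partial>lborel)"
    unfolding CN01_def by (subst nn_integral_density) auto
  also have "\<dots> = (\<integral>\<^sup>+r. indicator {0<..} r * ennreal r *
             (\<integral>\<^sup>+\<theta>. indicator {0..2*pi} \<theta> * (ennreal (exp (- r\<^sup>2) / pi) * f (r\<^sup>2)) \<partial>lborel) \<partial>lborel)"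
  proof -
    have cm: "(cmod (Complex (r * cos t) (r * sin t)))\<^sup>2 = r\<^sup>2" for r t
      by (simp add: cmod_def power_mult_distrib flip: distrib_left)
    show ?thesis by (subst polar_complex) (auto simp: cm)
  qed
  also have "\<dots> = (\<integral>\<^sup>+r. f (r\<^sup>2) * ennreal (exp (- r\<^sup>2)) * ennreal (2 * r) * indicator {0..} r \<partial>lborel)"
  proof (rule nn_integral_cong)
    fix r :: real
    have "(\<integral>\<^sup>+\<theta>. indicator {0..2*pi} \<theta> * (ennreal (exp (- r\<^sup>2) / pi) * f (r\<^sup>2)) \<partial>lborel)
          = (ennreal (exp (- r\<^sup>2) / pi) * f (r\<^sup>2)) * ennreal (2 * pi)"
      by (subst mult.commute) (simp add: nn_integral_cmult_indicator)
    moreover have "ennreal r * (ennreal (exp (- r\<^sup>2) / pi) * f (r\<^sup>2) * ennreal (2 * pi)) =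
                   f (r\<^sup>2) * ennreal (exp (- r\<^sup>2)) * ennreal (2 * r)" if "r > 0"
    proof -
      have "ennreal r * (ennreal (exp (- r\<^sup>2) / pi) * f (r\<^sup>2) * ennreal (2 * pi)) =
            f (r\<^sup>2) * (ennreal r * ennreal (exp (- r\<^sup>2) / pi) * ennreal (2 * pi))" by (simp add: mult_ac)
      also have "ennreal r * ennreal (exp (- r\<^sup>2) / pi) * ennreal (2 * pi) = ennreal (r * (exp (- r\<^sup>2) / pi) * (2 * pi))"
      proof -
        have "ennreal (r * (exp (- r\<^sup>2) / pi) * (2 * pi)) = ennreal (r * (exp (- r\<^sup>2) / pi)) * ennreal (2 * pi)"
          by (rule ennreal_mult) (use that in auto)
        also have "ennreal (r * (exp (- r\<^sup>2) / pi)) = ennreal r * ennreal (exp (- r\<^sup>2) / pi)"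
          by (rule ennreal_mult) (use that in auto)
        finally show ?thesis ..
      qed
      also have "r * (exp (- r\<^sup>2) / pi) * (2 * pi) = exp (- r\<^sup>2) * (2 * r)" by simp
      also have "ennreal (exp (- r\<^sup>2) * (2 * r)) = ennreal (exp (- r\<^sup>2)) * ennreal (2 * r)"
        by (rule ennreal_mult) (use that in auto)
      finally show ?thesis by (simp add: mult_ac)
    qed
    ultimately show "indicator {0<..} r * ennreal r *
             (\<integral>\<^sup>+\<theta>. indicator {0..2*pi} \<theta> * (ennreal (exp (- r\<^sup>2) / pi) * f (r\<^sup>2)) \<partial>lborel) =
          f (r\<^sup>2) * ennreal (exp (- r\<^sup>2)) * ennreal (2 * r) * indicator {0..} r"
      by (cases "r > 0") (auto simp: indicator_def)
  qed
  also have "\<dots> = (\<integral>\<^sup>+s. f s * ennreal (exp (- s)) * indicator (\<Union>n::nat. {(0::real)\<^sup>2..(0 + real (Suc n))\<^sup>2}) s \<partial>lborel)"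
    by (rule nn_sub_oneE[symmetric, where g="\<lambda>r. r\<^sup>2" and g'="\<lambda>r. 2 * r" and f="\<lambda>s. f s * ennreal (exp (- s))"])
      (auto intro!: derivative_eq_intros continuous_intros)
  also have "\<dots> = (\<integral>\<^sup>+s. f s * ennreal (exp (- s)) * indicator {0..} s \<partial>lborel)"
    by (simp only: sq_union)
  finally show ?thesis .
qed

lemma exp_total: "(\<integral>\<^sup>+s. ennreal (exp (- s)) * indicator {0..} s \<partial>lborel) = 1"
proof -
  have lim: "((\<lambda>x::real. exp (- x)) \<longlongrightarrow> 0) at_top"
    by (rule filterlim_compose[OF exp_at_bot filterlim_uminus_at_bot_at_top])
  have "(\<integral>\<^sup>+s. ennreal (exp (- s)) * indicator {0..} s \<partial>lborel) = ennreal (- 0 - (- exp (- 0)))"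
    by (rule nn_integral_FTC_atLeast[where F="\<lambda>x. - exp (- x)"])
       (auto intro!: derivative_eq_intros tendsto_minus_cancel_left[THEN iffD1] simp: lim)
  then show ?thesis by simp
qed

lemma exp_cdf:
  assumes "0 \<le> c"
  shows "(\<integral>\<^sup>+s. ennreal (exp (- s)) * indicator {0..c} s \<partial>lborel) = ennreal (1 - exp (- c))"
proof -
  have "(\<integral>\<^sup>+s. ennreal (exp (- s)) * indicator {0..c} s \<partial>lborel) = ennreal (- exp (- c) - (- exp (- 0)))"
    by (rule nn_integral_FTC_Icc[where F="\<lambda>x. - exp (- x)"])
       (use assms in \<open>auto intro!: derivative_eq_intros\<close>)
  then show ?thesis by simp
qed

lemma borel_measurable_cosh_real[measurable]: "(cosh :: real \<Rightarrow> real) \<in> borel_measurable borel"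
  by (intro borel_measurable_continuous_onI continuous_intros)

lemma borel_measurable_exp_real[measurable]: "(exp :: real \<Rightarrow> real) \<in> borel_measurable borel"
  by (intro borel_measurable_continuous_onI continuous_intros)

lemma expc_union:
  assumes "c > 0"
  shows "(\<Union>n::nat. {c * exp (- real (Suc n))..c * exp (real (Suc n))}) = {0<..}"
proof (rule set_eqI, rule iffI)
  fix x assume "x \<in> (\<Union>n::nat. {c * exp (- real (Suc n))..c * exp (real (Suc n))})"
  then have "\<exists>n::nat. x \<in> {c * exp (- real (Suc n))..c * exp (real (Suc n))}"
    by (simp only: UN_iff) (metis UNIV_I)
  then obtain n :: nat where "c * exp (- real (Suc n)) \<le> x" by (auto simp only: atLeastAtMost_iff)
  moreover have "0 < c * exp (- real (Suc n))" using assms by simp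
  ultimately show "x \<in> {0<..}" by simp
next
  fix x :: real assume "x \<in> {0<..}"
  then have x: "x > 0" by simp
  define t where "t = ln (x / c)"
  have xt: "x = c * exp t" unfolding t_def using x assms by simp
  obtain n :: nat where "\<bar>t\<bar> \<le> real n" using real_arch_simple by blast
  then have "- real (Suc n) \<le> t \<and> t \<le> real (Suc n)" by linarith
  then have "c * exp (- real (Suc n)) \<le> x \<and> x \<le> c * exp (real (Suc n))"
    unfolding xt using assms by simp
  then show "x \<in> (\<Union>n::nat. {c * exp (- real (Suc n))..c * exp (real (Suc n))})"
    by (simp only: UN_iff atLeastAtMost_iff) (metis UNIV_I)
qed

lemma bessel_nn:
  assumes A: "A > 0"
  shows "(\<integral>\<^sup>+u. ennreal (exp (- u - A / u)) * indicator {0<..} u \<partial>lborel) =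
         ennreal (2 * sqrt A) * (\<integral>\<^sup>+t. ennreal (exp (- (2 * sqrt A) * cosh t) * cosh t) * indicator {0..} t \<partial>lborel)"
proof -
  define c where "c = sqrt A"
  have c: "c > 0" "c * c = A" using A by (auto simp: c_def)
  let ?h = "\<lambda>t. ennreal (exp (- (2 * c) * cosh t)) * ennreal (c * exp t)"
  have "(\<integral>\<^sup>+u. ennreal (exp (- u - A / u)) * indicator {0<..} u \<partial>lborel) =
        (\<integral>\<^sup>+u. ennreal (exp (- u - A / u)) * indicator (\<Union>n::nat. {c * exp (- real (Suc n))..c * exp (real (Suc n))}) u \<partial>lborel)"
    by (simp only: expc_union[OF c(1)])
  also have "\<dots> = (\<integral>\<^sup>+t. ennreal (exp (- (c * exp t) - A / (c * exp t))) * ennreal (c * exp t) \<partial>lborel)"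
    by (rule nn_sub_twoE[where g="\<lambda>t. c * exp t" and g'="\<lambda>t. c * exp t"])
       (use c in \<open>auto intro!: derivative_eq_intros continuous_intros\<close>)
  also have "\<dots> = (\<integral>\<^sup>+t. ?h t \<partial>lborel)"
  proof (rule nn_integral_cong)
    fix t :: real
    have "- (c * exp t) - A / (c * exp t) = - (2 * c) * cosh t"
      using c by (simp add: cosh_def exp_minus field_simps)
    then show "ennreal (exp (- (c * exp t) - A / (c * exp t))) * ennreal (c * exp t) = ?h t" by simp
  qed
  also have "\<dots> = (\<integral>\<^sup>+t. indicator {0<..} t * ?h t \<partial>lborel) + (\<integral>\<^sup>+t. indicator {0<..} t * ?h (- t) \<partial>lborel)"
    by (rule nn_split0) measurable
  also have "\<dots> = (\<integral>\<^sup>+t. indicator {0<..} t * ?h t + indicator {0<..} t * ?h (- t) \<partial>lborel)"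
    by (rule nn_integral_add[symmetric]) measurable
  also have "\<dots> = (\<integral>\<^sup>+t. ennreal (2 * c) * (ennreal (exp (- (2 * c) * cosh t) * cosh t) * indicator {0..} t) \<partial>lborel)"
  proof (rule nn_integral_cong_AE)
    have "AE t in lborel. t \<noteq> 0" by (rule AE_lborel_singleton)
    then show "AE t in lborel. indicator {0<..} t * ?h t + indicator {0<..} t * ?h (- t) =
       ennreal (2 * c) * (ennreal (exp (- (2 * c) * cosh t) * cosh t) * indicator {0..} t)"
    proof eventually_elim
      fix t :: real assume "t \<noteq> 0"
      have ch: "c * exp t + c * exp (- t) = (2 * c) * cosh t" by (simp add: cosh_def field_simps)
      have "?h t + ?h (- t) = ennreal (exp (- (2 * c) * cosh t)) * (ennreal (c * exp t) + ennreal (c * exp (- t)))"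
        by (simp add: distrib_left)
      also have "ennreal (c * exp t) + ennreal (c * exp (- t)) = ennreal ((2 * c) * cosh t)"
        using c ch by (simp flip: ennreal_plus)
      also have "ennreal (exp (- (2 * c) * cosh t)) * ennreal ((2 * c) * cosh t) =
                 ennreal (2 * c) * ennreal (exp (- (2 * c) * cosh t) * cosh t)"
        using c by (simp add: ennreal_mult'[symmetric] ennreal_mult[symmetric] mult_ac)
      finally show "indicator {0<..} t * ?h t + indicator {0<..} t * ?h (- t) =
       ennreal (2 * c) * (ennreal (exp (- (2 * c) * cosh t) * cosh t) * indicator {0..} t)"
        using \<open>t \<noteq> 0\<close> by (auto simp: indicator_def)
    qed
  qed
  also have "\<dots> = ennreal (2 * c) * (\<integral>\<^sup>+t. ennreal (exp (- (2 * c) * cosh t) * cosh t) * indicator {0..} t \<partial>lborel)"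
    by (rule nn_integral_cmult) measurable
  finally show ?thesis unfolding c_def .
qed


lemma bessel_key:
  assumes A: "A > 0"
  defines "K \<equiv> 2 * sqrt A * bessel_K1 (2 * sqrt A)"
  shows "0 \<le> K" "K \<le> 1"
    "(\<integral>\<^sup>+u. ennreal (exp (- u) * (1 - exp (- (A / u)))) * indicator {0<..} u \<partial>lborel) = ennreal (1 - K)"
proof -
  define z where "z = 2 * sqrt A"
  have z: "z > 0" using A by (simp add: z_def)
  define X where "X = (\<integral>\<^sup>+t. ennreal (exp (- z * cosh t) * cosh t) * indicator {0..} t \<partial>lborel)"
  define B where "B = (\<integral>\<^sup>+u. ennreal (exp (- u - A / u)) * indicator {0<..} u \<partial>lborel)"
  have BX: "B = ennreal z * X" unfolding B_def X_def z_def using bessel_nn[OF A] by simp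
  have E1: "(\<integral>\<^sup>+u. ennreal (exp (- u)) * indicator {0<..} u \<partial>lborel) = 1"
  proof -
    have "(\<integral>\<^sup>+u. ennreal (exp (- u)) * indicator {0<..} u \<partial>lborel) = (\<integral>\<^sup>+u. ennreal (exp (- u)) * indicator {0..} u \<partial>lborel)"
      by (rule nn_integral_cong_AE) (use AE_lborel_singleton[of 0] in \<open>auto split: split_indicator\<close>)
    then show ?thesis using exp_total by simp
  qed
  have Ble: "B \<le> 1"
  proof -
    have "B \<le> (\<integral>\<^sup>+u. ennreal (exp (- u)) * indicator {0<..} u \<partial>lborel)"
      unfolding B_def using A
      by (intro nn_integral_mono) (auto split: split_indicator intro!: ennreal_leI)
    then show ?thesis using E1 by simp
  qed
  have Bfin: "B \<noteq> \<top>" using Ble by (auto simp: top_unique)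
  have Xfin: "X \<noteq> \<infinity>"
  proof
    assume "X = \<infinity>"
    then have "B = \<infinity>" using BX z by (simp add: ennreal_mult_top)
    then show False using Ble by (simp add: top_unique)
  qed
  have K1: "bessel_K1 z = enn2real X"
    unfolding bessel_K1_def set_lebesgue_integral_def X_def
    by (subst integral_eq_nn_integral)
       (auto intro!: arg_cong[where f=enn2real] nn_integral_cong simp: indicator_def)
  have Kz: "K = z * enn2real X" unfolding K_def z_def[symmetric] K1 ..
  have BK: "B = ennreal K"
    using Xfin z by (simp add: BX Kz ennreal_mult ennreal_enn2real_if)
  show "0 \<le> K" unfolding Kz using z by simp
  show "K \<le> 1" using Ble BK using \<open>0 \<le> K\<close> by (simp add: ennreal_le_1)
  have "(\<integral>\<^sup>+u. ennreal (exp (- u) * (1 - exp (- (A / u)))) * indicator {0<..} u \<partial>lborel) =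
        (\<integral>\<^sup>+u. ennreal (exp (- u)) * indicator {0<..} u - ennreal (exp (- u - A / u)) * indicator {0<..} u \<partial>lborel)"
  proof (rule nn_integral_cong)
    fix u :: real
    have "exp (- u) * (1 - exp (- (A / u))) = exp (- u) - exp (- u - A / u)"
      by (simp add: algebra_simps exp_diff exp_minus divide_inverse)
    then show "ennreal (exp (- u) * (1 - exp (- (A / u)))) * indicator {0<..} u =
        ennreal (exp (- u)) * indicator {0<..} u - ennreal (exp (- u - A / u)) * indicator {0<..} u"
      by (auto simp: indicator_def ennreal_minus)
  qed
  also have "\<dots> = 1 - B"
    unfolding B_def E1[symmetric]
    by (rule nn_integral_diff) (use A Bfin[unfolded B_def] in \<open>auto split: split_indicator intro!: ennreal_leI\<close>)
  also have "\<dots> = ennreal (1 - K)" using BK \<open>0 \<le> K\<close> by (simp add: ennreal_minus flip: ennreal_1)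
  finally show "(\<integral>\<^sup>+u. ennreal (exp (- u) * (1 - exp (- (A / u)))) * indicator {0<..} u \<partial>lborel) = ennreal (1 - K)" .
qed

lemma cmod_polar: "cmod (Complex (r * cos t) (r * sin t)) = \<bar>r\<bar>"
proof -
  have "(cmod (Complex (r * cos t) (r * sin t)))\<^sup>2 = r\<^sup>2"
    by (simp add: cmod_def power_mult_distrib flip: distrib_left)
  then show ?thesis by (metis abs_of_nonneg norm_ge_zero power2_eq_iff real_sqrt_abs real_sqrt_power)
qed

lemma disc_polar_lborel:
  fixes f :: "complex \<Rightarrow> ennreal"
  assumes [measurable]: "f \<in> borel_measurable borel"
  shows "(\<integral>\<^sup>+w. f w * indicator (cball 0 R) w \<partial>lborel) =
     (\<integral>\<^sup>+r. indicator {0<..R} r * ennreal r * (\<integral>\<^sup>+\<theta>. indicator {0..2*pi} \<theta> * f (Complex (r * cos \<theta>) (r * sin \<theta>)) \<partial>lborel) \<partial>lborel)"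
  by (subst polar_complex)
     (auto intro!: nn_integral_cong simp: cmod_polar indicator_def mult.assoc[symmetric] simp del: mult.assoc)

lemma disc_measure:
  assumes R: "R > 0"
  shows "emeasure lborel (cball (0::complex) R) = ennreal (pi * R\<^sup>2)"
proof -
  have "emeasure lborel (cball (0::complex) R) = (\<integral>\<^sup>+w. 1 * indicator (cball (0::complex) R) w \<partial>lborel)"
    by simp
  also have "\<dots> = (\<integral>\<^sup>+r. indicator {0<..R} r * ennreal r * (\<integral>\<^sup>+\<theta>. indicator {0..2*pi} \<theta> * 1 \<partial>lborel) \<partial>lborel)"
    by (rule disc_polar_lborel) auto
  also have "\<dots> = (\<integral>\<^sup>+r. ennreal (2 * pi) * (ennreal r * indicator {0..R} r) \<partial>lborel)"
  proof (rule nn_integral_cong_AE)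
    have I2: "(\<integral>\<^sup>+\<theta>. indicator {0..2*pi} \<theta> * 1 \<partial>lborel) = ennreal (2*pi)" by simp
    show "AE r in lborel. indicator {0<..R} r * ennreal r * (\<integral>\<^sup>+\<theta>. indicator {0..2*pi} \<theta> * 1 \<partial>lborel) = ennreal (2 * pi) * (ennreal r * indicator {0..R} r)"
      unfolding I2 using AE_lborel_singleton[of 0]
      by eventually_elim (auto simp: indicator_def mult_ac)
  qed
  also have "\<dots> = ennreal (2 * pi) * (\<integral>\<^sup>+r. ennreal r * indicator {0..R} r \<partial>lborel)"
    by (rule nn_integral_cmult) measurable
  also have "(\<integral>\<^sup>+r. ennreal r * indicator {0..R} r \<partial>lborel) = ennreal (R\<^sup>2 / 2 - 0\<^sup>2 / 2)"
    by (rule nn_integral_FTC_Icc) (use R in \<open>auto intro!: derivative_eq_intros\<close>)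
  also have "ennreal (2 * pi) * ennreal (R\<^sup>2 / 2 - 0\<^sup>2 / 2) = ennreal (pi * R\<^sup>2)"
    by (simp flip: ennreal_mult)
  finally show ?thesis .
qed

lemma prob_space_unif_disc: "R > 0 \<Longrightarrow> prob_space (unif_disc R)"
  unfolding unif_disc_def by (rule prob_space_uniform_measure) (auto simp: disc_measure)

lemma disc_polar:
  fixes f :: "complex \<Rightarrow> ennreal"
  assumes [measurable]: "f \<in> borel_measurable borel" and R: "R > 0"
  shows "(\<integral>\<^sup>+w. f w \<partial>unif_disc R) = ennreal (1 / (pi * R\<^sup>2)) *
     (\<integral>\<^sup>+r. indicator {0<..R} r * ennreal r * (\<integral>\<^sup>+\<theta>. indicator {0..2*pi} \<theta> * f (Complex (r * cos \<theta>) (r * sin \<theta>)) \<partial>lborel) \<partial>lborel)"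
proof -
  have "(\<integral>\<^sup>+w. f w \<partial>unif_disc R) = (\<integral>\<^sup>+w. f w * indicator (cball 0 R) w \<partial>lborel) / ennreal (pi * R\<^sup>2)"
    unfolding unif_disc_def by (subst nn_integral_uniform_measure) (auto simp: disc_measure[OF R])
  also have "\<dots> = ennreal (1 / (pi * R\<^sup>2)) * (\<integral>\<^sup>+w. f w * indicator (cball 0 R) w \<partial>lborel)"
    using R by (simp add: divide_ennreal_def ennreal_inverse_positive ennreal_1[symmetric] ennreal_divide_eq_top_iff inverse_ennreal mult.commute
        del: ennreal_1) (simp add: field_simps)
  finally show ?thesis by (simp add: disc_polar_lborel)
qed

lemma prob_space_CN01: "prob_space CN01"
proof
  have "emeasure CN01 (space CN01) = (\<integral>\<^sup>+z. (\<lambda>_. 1::ennreal) ((cmod z)\<^sup>2) \<partial>CN01)"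
    by simp
  also have "\<dots> = (\<integral>\<^sup>+s. 1 * ennreal (exp (- s)) * indicator {0..} s \<partial>lborel)"
    by (rule CN_radial) auto
  also have "\<dots> = 1" using exp_total by simp
  finally show "emeasure CN01 (space CN01) = 1" .
qed

thm prob_space_imp_sigma_finite prob_space_pair prob_space_PiM prob_space_measure_pmf
lemma sets_unif_disc[measurable_cong, simp]: "sets (unif_disc R) = sets borel"
  unfolding unif_disc_def by simp

lemma space_unif_disc[simp]: "space (unif_disc R) = UNIV"
  unfolding unif_disc_def by simp

lemma sets_CN01[measurable_cong, simp]: "sets CN01 = sets borel"
  unfolding CN01_def by simp

lemma space_CN01[simp]: "space CN01 = UNIV"
  unfolding CN01_def by simp

lemma prob_space_U: "prob_space (uniform_measure lborel {0..<1::real})"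
  by (rule prob_space_uniform_measure) auto

lemma PiM_comp_nn:
  fixes M :: "'a measure"
  assumes "prob_space M" and [measurable]: "f \<in> borel_measurable M"
  shows "(\<integral>\<^sup>+x. f (x k) \<partial>(\<Pi>\<^sub>M i\<in>(UNIV::nat set). M)) = (\<integral>\<^sup>+y. f y \<partial>M)"
proof -
  have "(\<integral>\<^sup>+y. f y \<partial>M) = (\<integral>\<^sup>+y. f y \<partial>distr (\<Pi>\<^sub>M i\<in>(UNIV::nat set). M) M (\<lambda>\<omega>. \<omega> k))"
    by (subst distr_PiM_component) (use assms in auto)
  also have "\<dots> = (\<integral>\<^sup>+x. f (x k) \<partial>(\<Pi>\<^sub>M i\<in>(UNIV::nat set). M))"
    by (subst nn_integral_distr) auto
  finally show ?thesis ..
qed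

lemma RED_inner:
  fixes \<psi> :: "complex \<times> complex \<times> complex \<times> complex \<Rightarrow> ennreal"
  assumes R: "R > 0"
  assumes M\<psi>[measurable]: "\<psi> \<in> borel_measurable (borel \<Otimes>\<^sub>M (borel \<Otimes>\<^sub>M (borel \<Otimes>\<^sub>M borel)))"
  shows "(\<integral>\<^sup>+y. \<psi> (fst y k, fst (snd y), fst (snd (snd y)) k, snd (snd (snd y)) k)
            \<partial>((\<Pi>\<^sub>M i\<in>(UNIV::nat set). unif_disc R) \<Otimes>\<^sub>M (CN01 \<Otimes>\<^sub>M ((\<Pi>\<^sub>M i\<in>(UNIV::nat set). CN01) \<Otimes>\<^sub>M (\<Pi>\<^sub>M i\<in>(UNIV::nat set). CN01)))))
       = (\<integral>\<^sup>+w. \<integral>\<^sup>+a. \<integral>\<^sup>+h. \<integral>\<^sup>+g. \<psi> (w, a, h, g) \<partial>CN01 \<partial>CN01 \<partial>CN01 \<partial>unif_disc R)"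
proof -
  let ?Z = "\<Pi>\<^sub>M i\<in>(UNIV::nat set). unif_disc R"
  let ?H = "\<Pi>\<^sub>M i\<in>(UNIV::nat set). CN01"
  have pD: "prob_space (unif_disc R)" using R by (rule prob_space_unif_disc)
  have pC: "prob_space CN01" by (rule prob_space_CN01)
  interpret C: prob_space CN01 by (rule pC)
  have pH: "prob_space ?H" by (rule prob_space_PiM) (rule pC)
  have pZ: "prob_space ?Z" by (rule prob_space_PiM) (rule pD)
  have sCHH: "sigma_finite_measure (CN01 \<Otimes>\<^sub>M (?H \<Otimes>\<^sub>M ?H))"
    by (intro prob_space_imp_sigma_finite prob_space_pair pC pH)
  have sHH: "sigma_finite_measure (?H \<Otimes>\<^sub>M ?H)"
    by (intro prob_space_imp_sigma_finite prob_space_pair pH)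
  have sH: "sigma_finite_measure ?H" by (intro prob_space_imp_sigma_finite pH)
  have "(\<integral>\<^sup>+y. \<psi> (fst y k, fst (snd y), fst (snd (snd y)) k, snd (snd (snd y)) k) \<partial>(?Z \<Otimes>\<^sub>M (CN01 \<Otimes>\<^sub>M (?H \<Otimes>\<^sub>M ?H))))
     = (\<integral>\<^sup>+z. \<integral>\<^sup>+r. \<psi> (z k, fst r, fst (snd r) k, snd (snd r) k) \<partial>(CN01 \<Otimes>\<^sub>M (?H \<Otimes>\<^sub>M ?H)) \<partial>?Z)"
    by (subst sigma_finite_measure.nn_integral_fst[OF sCHH, symmetric]) (auto simp: split_beta')
  also have "\<dots> = (\<integral>\<^sup>+z. \<integral>\<^sup>+a. \<integral>\<^sup>+q. \<psi> (z k, a, fst q k, snd q k) \<partial>(?H \<Otimes>\<^sub>M ?H) \<partial>CN01 \<partial>?Z)"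
    by (intro nn_integral_cong, subst sigma_finite_measure.nn_integral_fst[OF sHH, symmetric]) (auto simp: split_beta')
  also have "\<dots> = (\<integral>\<^sup>+z. \<integral>\<^sup>+a. \<integral>\<^sup>+hh. \<integral>\<^sup>+gg. \<psi> (z k, a, hh k, gg k) \<partial>?H \<partial>?H \<partial>CN01 \<partial>?Z)"
    by (intro nn_integral_cong, subst sigma_finite_measure.nn_integral_fst[OF sH, symmetric]) (auto simp: split_beta')
  also have "\<dots> = (\<integral>\<^sup>+z. \<integral>\<^sup>+a. \<integral>\<^sup>+hh. \<integral>\<^sup>+g. \<psi> (z k, a, hh k, g) \<partial>CN01 \<partial>?H \<partial>CN01 \<partial>?Z)"
    by (intro nn_integral_cong PiM_comp_nn[OF pC]) auto
  also have "\<dots> = (\<integral>\<^sup>+z. \<integral>\<^sup>+a. \<integral>\<^sup>+h. \<integral>\<^sup>+g. \<psi> (z k, a, h, g) \<partial>CN01 \<partial>CN01 \<partial>CN01 \<partial>?Z)"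
    by (intro nn_integral_cong PiM_comp_nn[OF pC, where f="\<lambda>h. \<integral>\<^sup>+g. \<psi> (_, _, h, g) \<partial>CN01"]) auto
  also have "\<dots> = (\<integral>\<^sup>+w. \<integral>\<^sup>+a. \<integral>\<^sup>+h. \<integral>\<^sup>+g. \<psi> (w, a, h, g) \<partial>CN01 \<partial>CN01 \<partial>CN01 \<partial>unif_disc R)"
    by (rule PiM_comp_nn[OF pD, where f="\<lambda>w. \<integral>\<^sup>+a. \<integral>\<^sup>+h. \<integral>\<^sup>+g. \<psi> (w, a, h, g) \<partial>CN01 \<partial>CN01 \<partial>CN01"]) auto
  finally show ?thesis .
qed

lemma measurable_K[measurable]:
  assumes [measurable]: "f \<in> M \<rightarrow>\<^sub>M count_space UNIV" "g \<in> borel_measurable M"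
  shows "(\<lambda>x. nat \<lfloor>g x * real (f x)\<rfloor>) \<in> M \<rightarrow>\<^sub>M count_space UNIV"
proof -
  have "(\<lambda>x. \<lfloor>g x * real (f x)\<rfloor>) \<in> M \<rightarrow>\<^sub>M count_space UNIV"
    by (rule measurable_compose[OF _ measurable_real_floor]) measurable
  then show ?thesis by (rule measurable_compose) auto
qed

lemma RED:
  fixes \<Psi> :: "nat \<times> complex \<times> complex \<times> complex \<times> complex \<Rightarrow> ennreal"
  assumes mu: "mu > 0" and R: "R > 0"
  assumes M\<Psi>[measurable]: "\<Psi> \<in> borel_measurable (count_space UNIV \<Otimes>\<^sub>M (borel \<Otimes>\<^sub>M (borel \<Otimes>\<^sub>M (borel \<Otimes>\<^sub>M borel))))"
  shows "(\<integral>\<^sup>+x. \<Psi> (fst x, fst (snd (snd x)) (nat \<lfloor>fst (snd x) * real (fst x)\<rfloor>), fst (snd (snd (snd x))),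
                  fst (snd (snd (snd (snd x)))) (nat \<lfloor>fst (snd x) * real (fst x)\<rfloor>),
                  snd (snd (snd (snd (snd x)))) (nat \<lfloor>fst (snd x) * real (fst x)\<rfloor>)) \<partial>relay_model mu R)
       = (\<integral>\<^sup>+n. \<integral>\<^sup>+w. \<integral>\<^sup>+a. \<integral>\<^sup>+h. \<integral>\<^sup>+g. \<Psi> (n, w, a, h, g) \<partial>CN01 \<partial>CN01 \<partial>CN01 \<partial>unif_disc R \<partial>measure_pmf (poisson_pmf mu))"
proof -
  let ?Z = "\<Pi>\<^sub>M i\<in>(UNIV::nat set). unif_disc R"
  let ?H = "\<Pi>\<^sub>M i\<in>(UNIV::nat set). CN01"
  let ?U = "uniform_measure lborel {0..<1::real}"
  let ?R2 = "?Z \<Otimes>\<^sub>M (CN01 \<Otimes>\<^sub>M (?H \<Otimes>\<^sub>M ?H))"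
  let ?P = "measure_pmf (poisson_pmf mu)"
  have pD: "prob_space (unif_disc R)" using R by (rule prob_space_unif_disc)
  have pC: "prob_space CN01" by (rule prob_space_CN01)
  have pH: "prob_space ?H" by (rule prob_space_PiM) (rule pC)
  have pZ: "prob_space ?Z" by (rule prob_space_PiM) (rule pD)
  have pR2: "prob_space ?R2" by (intro prob_space_pair pZ pC pH)
  have pR1: "prob_space (?U \<Otimes>\<^sub>M ?R2)" by (intro prob_space_pair pR2 prob_space_U)
  interpret U: prob_space ?U by (rule prob_space_U)
  define Kf where "Kf n v = nat \<lfloor>v * real n\<rfloor>" for n :: nat and v :: real
  have "(\<integral>\<^sup>+x. \<Psi> (fst x, fst (snd (snd x)) (nat \<lfloor>fst (snd x) * real (fst x)\<rfloor>), fst (snd (snd (snd x))),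
                  fst (snd (snd (snd (snd x)))) (nat \<lfloor>fst (snd x) * real (fst x)\<rfloor>),
                  snd (snd (snd (snd (snd x)))) (nat \<lfloor>fst (snd x) * real (fst x)\<rfloor>)) \<partial>(?P \<Otimes>\<^sub>M (?U \<Otimes>\<^sub>M ?R2)))
      = (\<integral>\<^sup>+n. \<integral>\<^sup>+y. \<Psi> (n, fst (snd y) (Kf n (fst y)), fst (snd (snd y)),
                  fst (snd (snd (snd y))) (Kf n (fst y)),
                  snd (snd (snd (snd y))) (Kf n (fst y))) \<partial>(?U \<Otimes>\<^sub>M ?R2) \<partial>?P)"
  proof (subst sigma_finite_measure.nn_integral_fst[OF prob_space_imp_sigma_finite[OF pR1], symmetric])
    show "(\<lambda>x. \<Psi> (fst x, fst (snd (snd x)) (nat \<lfloor>fst (snd x) * real (fst x)\<rfloor>), fst (snd (snd (snd x))),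
                  fst (snd (snd (snd (snd x)))) (nat \<lfloor>fst (snd x) * real (fst x)\<rfloor>),
                  snd (snd (snd (snd (snd x)))) (nat \<lfloor>fst (snd x) * real (fst x)\<rfloor>))) \<in> borel_measurable (?P \<Otimes>\<^sub>M (?U \<Otimes>\<^sub>M ?R2))"
      by (rule measurable_compose_countable[where g="\<lambda>x. nat \<lfloor>fst (snd x) * real (fst x)\<rfloor>" and
          f="\<lambda>i x. \<Psi> (fst x, fst (snd (snd x)) i, fst (snd (snd (snd x))), fst (snd (snd (snd (snd x)))) i, snd (snd (snd (snd (snd x)))) i)"])
         measurable
  qed (simp add: Kf_def)
  also have "\<dots> = (\<integral>\<^sup>+n. \<integral>\<^sup>+v. \<integral>\<^sup>+y. \<Psi> (n, fst y (Kf n v), fst (snd y),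
                  fst (snd (snd y)) (Kf n v), snd (snd (snd y)) (Kf n v)) \<partial>?R2 \<partial>?U \<partial>?P)"
  proof (intro nn_integral_cong)
    fix n :: nat
    show "(\<integral>\<^sup>+y. \<Psi> (n, fst (snd y) (Kf n (fst y)), fst (snd (snd y)),
                  fst (snd (snd (snd y))) (Kf n (fst y)),
                  snd (snd (snd (snd y))) (Kf n (fst y))) \<partial>(?U \<Otimes>\<^sub>M ?R2)) =
          (\<integral>\<^sup>+v. \<integral>\<^sup>+y. \<Psi> (n, fst y (Kf n v), fst (snd y),
                  fst (snd (snd y)) (Kf n v), snd (snd (snd y)) (Kf n v)) \<partial>?R2 \<partial>?U)"
    proof (subst sigma_finite_measure.nn_integral_fst[OF prob_space_imp_sigma_finite[OF pR2], symmetric])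
      show "(\<lambda>y. \<Psi> (n, fst (snd y) (Kf n (fst y)), fst (snd (snd y)),
                  fst (snd (snd (snd y))) (Kf n (fst y)),
                  snd (snd (snd (snd y))) (Kf n (fst y)))) \<in> borel_measurable (?U \<Otimes>\<^sub>M ?R2)"
        unfolding Kf_def
        by (rule measurable_compose_countable[where g="\<lambda>y. nat \<lfloor>fst y * real n\<rfloor>" and
          f="\<lambda>i y. \<Psi> (n, fst (snd y) i, fst (snd (snd y)), fst (snd (snd (snd y))) i, snd (snd (snd (snd y))) i)"])
         measurable
    qed simp
  qed
  also have "\<dots> = (\<integral>\<^sup>+n. \<integral>\<^sup>+v. (\<integral>\<^sup>+w. \<integral>\<^sup>+a. \<integral>\<^sup>+h. \<integral>\<^sup>+g. \<Psi> (n, w, a, h, g) \<partial>CN01 \<partial>CN01 \<partial>CN01 \<partial>unif_disc R) \<partial>?U \<partial>?P)"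
    by (intro nn_integral_cong RED_inner[OF R]) measurable
  also have "\<dots> = (\<integral>\<^sup>+n. \<integral>\<^sup>+w. \<integral>\<^sup>+a. \<integral>\<^sup>+h. \<integral>\<^sup>+g. \<Psi> (n, w, a, h, g) \<partial>CN01 \<partial>CN01 \<partial>CN01 \<partial>unif_disc R \<partial>?P)"
    by (simp add: nn_integral_const U.emeasure_space_1)
  finally show ?thesis unfolding relay_model_def .
qed

lemma bessel_K1_measurable[measurable]: "bessel_K1 \<in> borel_measurable borel"
  unfolding bessel_K1_def[abs_def] set_lebesgue_integral_def by measurable
lemma LBINT0_Icc: "0 \<le> b \<Longrightarrow> (LBINT x=0..ereal b. f x) = (LBINT x:{0..b}. f x)"
  using interval_integral_Icc[of 0 b f] by (simp add: zero_ereal_def)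
lemma "(\<lambda>r. LBINT \<theta>=0..2*pi. exp (- r * cos \<theta>) * bessel_K1 (r * \<theta>)) \<in> borel_measurable borel"
  by (simp add: LBINT0_Icc set_lebesgue_integral_def) measurable

lemma ennreal_LBINT0:
  fixes f :: "real \<Rightarrow> real"
  assumes b: "0 \<le> b" and [measurable]: "f \<in> borel_measurable borel"
    and nn: "\<And>x. x \<in> {0..b} \<Longrightarrow> 0 \<le> f x" and bd: "\<And>x. x \<in> {0..b} \<Longrightarrow> f x \<le> M"
  shows "ennreal (LBINT x=0..ereal b. f x) = (\<integral>\<^sup>+x. ennreal (f x) * indicator {0..b} x \<partial>lborel)"
proof -
  have eq: "(\<integral>\<^sup>+x. ennreal (indicator {0..b} x * f x) \<partial>lborel) = (\<integral>\<^sup>+x. ennreal (f x) * indicator {0..b} x \<partial>lborel)"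
    by (auto intro!: nn_integral_cong simp: indicator_def)
  have fin: "(\<integral>\<^sup>+x. ennreal (f x) * indicator {0..b} x \<partial>lborel) \<noteq> \<top>"
  proof -
    have "(\<integral>\<^sup>+x. ennreal (f x) * indicator {0..b} x \<partial>lborel) \<le> (\<integral>\<^sup>+x. ennreal M * indicator {0..b} x \<partial>lborel)"
      by (intro nn_integral_mono) (auto simp: indicator_def intro!: ennreal_leI bd)
    also have "\<dots> = ennreal M * ennreal b" using b by (simp add: nn_integral_cmult_indicator)
    also have "\<dots> < \<top>" by (simp add: ennreal_mult_less_top)
    finally show ?thesis by simp
  qed
  have "(LBINT x=0..ereal b. f x) = enn2real (\<integral>\<^sup>+x. ennreal (indicator {0..b} x *\<^sub>R f x) \<partial>lborel)"
    unfolding LBINT0_Icc[OF b] set_lebesgue_integral_def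
    by (rule integral_eq_nn_integral) (auto simp: indicator_def nn)
  also have "\<dots> = enn2real (\<integral>\<^sup>+x. ennreal (f x) * indicator {0..b} x \<partial>lborel)"
    using eq by simp
  finally show ?thesis using fin by (simp add: ennreal_enn2real_if)
qed

definition Tmap :: "nat \<times> real \<times> (nat \<Rightarrow> complex) \<times> complex \<times> (nat \<Rightarrow> complex) \<times> (nat \<Rightarrow> complex)
   \<Rightarrow> nat \<times> complex \<times> complex \<times> complex \<times> complex" where
  "Tmap x = (fst x, fst (snd (snd x)) (nat \<lfloor>fst (snd x) * real (fst x)\<rfloor>), fst (snd (snd (snd x))),
                  fst (snd (snd (snd (snd x)))) (nat \<lfloor>fst (snd x) * real (fst x)\<rfloor>),
                  snd (snd (snd (snd (snd x)))) (nat \<lfloor>fst (snd x) * real (fst x)\<rfloor>))"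

lemma Tmap_measurable:
  "Tmap \<in> relay_model mu R \<rightarrow>\<^sub>M (count_space UNIV \<Otimes>\<^sub>M (borel \<Otimes>\<^sub>M (borel \<Otimes>\<^sub>M (borel \<Otimes>\<^sub>M borel))))"
proof -
  have K: "(\<lambda>x. nat \<lfloor>fst (snd x) * real (fst x)\<rfloor>) \<in> relay_model mu R \<rightarrow>\<^sub>M count_space UNIV"
    unfolding relay_model_def by measurable
  have c1: "(\<lambda>x. fst (snd (snd x)) (nat \<lfloor>fst (snd x) * real (fst x)\<rfloor>)) \<in> borel_measurable (relay_model mu R)"
    by (rule measurable_compose_countable[OF _ K, where f="\<lambda>i x. fst (snd (snd x)) i"]) (unfold relay_model_def, measurable)
  have c2: "(\<lambda>x. fst (snd (snd (snd (snd x)))) (nat \<lfloor>fst (snd x) * real (fst x)\<rfloor>)) \<in> borel_measurable (relay_model mu R)"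
    by (rule measurable_compose_countable[OF _ K, where f="\<lambda>i x. fst (snd (snd (snd (snd x)))) i"]) (unfold relay_model_def, measurable)
  have c3: "(\<lambda>x. snd (snd (snd (snd (snd x)))) (nat \<lfloor>fst (snd x) * real (fst x)\<rfloor>)) \<in> borel_measurable (relay_model mu R)"
    by (rule measurable_compose_countable[OF _ K, where f="\<lambda>i x. snd (snd (snd (snd (snd x)))) i"]) (unfold relay_model_def, measurable)
  have c0: "fst \<in> relay_model mu R \<rightarrow>\<^sub>M count_space UNIV" unfolding relay_model_def by measurable
  have c4: "(\<lambda>x. fst (snd (snd (snd x)))) \<in> borel_measurable (relay_model mu R)" unfolding relay_model_def by measurable
  show ?thesis unfolding Tmap_def
    by (intro measurable_Pair c0 c1 c2 c3 c4)
qed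

lemma RED_set:
  fixes \<Phi> :: "nat \<times> complex \<times> complex \<times> complex \<times> complex \<Rightarrow> bool"
  assumes mu: "mu > 0" and R: "R > 0"
  assumes M\<Phi>[measurable]: "Measurable.pred (count_space UNIV \<Otimes>\<^sub>M (borel \<Otimes>\<^sub>M (borel \<Otimes>\<^sub>M (borel \<Otimes>\<^sub>M borel)))) \<Phi>"
  shows "{x \<in> space (relay_model mu R). \<Phi> (Tmap x)} \<in> sets (relay_model mu R)"
    "emeasure (relay_model mu R) {x \<in> space (relay_model mu R). \<Phi> (Tmap x)} =
       (\<integral>\<^sup>+n. \<integral>\<^sup>+w. \<integral>\<^sup>+a. \<integral>\<^sup>+h. \<integral>\<^sup>+g. indicator {t. \<Phi> t} (n, w, a, h, g) \<partial>CN01 \<partial>CN01 \<partial>CN01 \<partial>unif_disc R \<partial>measure_pmf (poisson_pmf mu))"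
proof -
  have MT[measurable]: "Tmap \<in> relay_model mu R \<rightarrow>\<^sub>M (count_space UNIV \<Otimes>\<^sub>M (borel \<Otimes>\<^sub>M (borel \<Otimes>\<^sub>M (borel \<Otimes>\<^sub>M borel))))"
    by (rule Tmap_measurable)
  show S: "{x \<in> space (relay_model mu R). \<Phi> (Tmap x)} \<in> sets (relay_model mu R)" by measurable
  have "emeasure (relay_model mu R) {x \<in> space (relay_model mu R). \<Phi> (Tmap x)} =
        (\<integral>\<^sup>+x. indicator {t. \<Phi> t} (Tmap x) \<partial>relay_model mu R)"
  proof -
    have "emeasure (relay_model mu R) {x \<in> space (relay_model mu R). \<Phi> (Tmap x)} =
          (\<integral>\<^sup>+x. indicator {x \<in> space (relay_model mu R). \<Phi> (Tmap x)} x \<partial>relay_model mu R)"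
      by (rule nn_integral_indicator[OF S, symmetric])
    also have "\<dots> = (\<integral>\<^sup>+x. indicator {t. \<Phi> t} (Tmap x) \<partial>relay_model mu R)"
      by (rule nn_integral_cong) (simp add: indicator_def)
    finally show ?thesis .
  qed
  also have "\<dots> = (\<integral>\<^sup>+n. \<integral>\<^sup>+w. \<integral>\<^sup>+a. \<integral>\<^sup>+h. \<integral>\<^sup>+g. indicator {t. \<Phi> t} (n, w, a, h, g) \<partial>CN01 \<partial>CN01 \<partial>CN01 \<partial>unif_disc R \<partial>measure_pmf (poisson_pmf mu))"
    unfolding Tmap_def by (rule RED[OF mu R]) measurable
  finally show "emeasure (relay_model mu R) {x \<in> space (relay_model mu R). \<Phi> (Tmap x)} = \<dots>" .
qed

lemma CN_const[simp]: "(\<integral>\<^sup>+x. c \<partial>CN01) = c"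
  using prob_space.emeasure_space_1[OF prob_space_CN01] by (simp add: nn_integral_const)

lemma disc_const: "R > 0 \<Longrightarrow> (\<integral>\<^sup>+x. c \<partial>unif_disc R) = c"
  using prob_space.emeasure_space_1[OF prob_space_unif_disc] by (simp add: nn_integral_const)

lemma CN_lt:
  assumes "0 \<le> c"
  shows "(\<integral>\<^sup>+a. of_bool ((cmod a)\<^sup>2 < c) \<partial>CN01) = ennreal (1 - exp (- c))"
proof -
  have "(\<integral>\<^sup>+a. of_bool ((cmod a)\<^sup>2 < c) \<partial>CN01) = (\<integral>\<^sup>+s. of_bool (s < c) * ennreal (exp (- s)) * indicator {0..} s \<partial>lborel)"
    by (rule CN_radial[where f="\<lambda>s. of_bool (s < c)"]) measurable
  also have "\<dots> = (\<integral>\<^sup>+s. ennreal (exp (- s)) * indicator {0..c} s \<partial>lborel)"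
    by (rule nn_integral_cong_AE) (use AE_lborel_singleton[of c] in \<open>auto simp: indicator_def\<close>)
  also have "\<dots> = ennreal (1 - exp (- c))" by (rule exp_cdf[OF assms])
  finally show ?thesis .
qed

lemma space_relay_model[simp]: "space (relay_model mu R) = UNIV"
  unfolding relay_model_def by (simp add: space_pair_measure space_PiM PiE_UNIV_domain)

lemma transport:
  assumes X: "X \<in> M \<rightarrow>\<^sub>M N" and D: "distr M N X = N" and S: "{x \<in> space N. P x} \<in> sets N"
  shows "measure M {\<omega> \<in> space M. P (X \<omega>)} = measure N {x \<in> space N. P x}"
proof -
  have "measure N {x \<in> space N. P x} = measure (distr M N X) {x \<in> space N. P x}" using D by simp
  also have "\<dots> = measure M (X -` {x \<in> space N. P x} \<inter> space M)" by (rule measure_distr[OF X S])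
  also have "X -` {x \<in> space N. P x} \<inter> space M = {\<omega> \<in> space M. P (X \<omega>)}"
    using measurable_space[OF X] by auto
  finally show ?thesis ..
qed

lemma pmf_ind0:
  assumes "mu > 0"
  shows "(\<integral>\<^sup>+n. of_bool (n = 0) * c \<partial>measure_pmf (poisson_pmf mu)) = ennreal (exp (- mu)) * c"
proof -
  have "(\<integral>\<^sup>+n. of_bool (n = 0) * c \<partial>measure_pmf (poisson_pmf mu)) = (\<integral>\<^sup>+n. c * indicator {0} n \<partial>measure_pmf (poisson_pmf mu))"
    by (auto intro!: nn_integral_cong simp: indicator_def)
  also have "\<dots> = c * emeasure (measure_pmf (poisson_pmf mu)) {0}"
    by (rule nn_integral_cmult_indicator) auto
  also have "\<dots> = ennreal (exp (- mu)) * c"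
    using assms by (simp add: emeasure_pmf_single mult.commute)
  finally show ?thesis .
qed

lemma pmf_ind1:
  assumes "mu > 0"
  shows "(\<integral>\<^sup>+n. of_bool (1 \<le> n) * c \<partial>measure_pmf (poisson_pmf mu)) = ennreal (1 - exp (- mu)) * c"
proof -
  have "(\<integral>\<^sup>+n. of_bool (1 \<le> n) * c \<partial>measure_pmf (poisson_pmf mu)) = (\<integral>\<^sup>+n. c * indicator (UNIV - {0}) n \<partial>measure_pmf (poisson_pmf mu))"
    by (auto intro!: nn_integral_cong simp: indicator_def)
  also have "\<dots> = c * emeasure (measure_pmf (poisson_pmf mu)) (UNIV - {0})"
    by (rule nn_integral_cmult_indicator) auto
  also have "emeasure (measure_pmf (poisson_pmf mu)) (UNIV - {0}) = ennreal (1 - exp (- mu))"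
  proof -
    have "measure (measure_pmf (poisson_pmf mu)) (UNIV - {0}) = 1 - measure (measure_pmf (poisson_pmf mu)) {0}"
      using measure_pmf.prob_compl[of "{0}" "poisson_pmf mu"] by simp
    also have "measure (measure_pmf (poisson_pmf mu)) {0} = exp (- mu)"
      using assms by (simp add: measure_pmf_single)
    finally show ?thesis by (simp add: measure_pmf.emeasure_eq_measure)
  qed
  finally show ?thesis by (simp add: mult.commute)
qed


lemma inner_g:
  assumes eta: "0 < eta" and C: "0 < C"
  shows "(\<integral>\<^sup>+g. of_bool (x0 + eta * ((cmod g)\<^sup>2 / C) * (x - eps) < eps \<and> x > eps) \<partial>CN01) =
         of_bool (x > eps \<and> x0 < eps) * ennreal (1 - exp (- (C * (eps - x0) / (eta * (x - eps)))))"
proof (cases "x > eps")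
  case False
  then show ?thesis by simp
next
  case xe: True
  show ?thesis
  proof (cases "x0 < eps")
    case False
    have "\<not> (x0 + eta * ((cmod g)\<^sup>2 / C) * (x - eps) < eps)" for g
    proof -
      have "0 \<le> eta * ((cmod g)\<^sup>2 / C) * (x - eps)" using eta C xe by simp
      then show ?thesis using False by linarith
    qed
    then show ?thesis using False by simp
  next
    case x0: True
    have iff: "(x0 + eta * (s / C) * (x - eps) < eps) \<longleftrightarrow> s < C * (eps - x0) / (eta * (x - eps))" for s
    proof -
      have "(x0 + eta * (s / C) * (x - eps) < eps) \<longleftrightarrow> s * (eta * (x - eps)) < C * (eps - x0)"
        using eta C xe by (simp add: field_simps)
      also have "\<dots> \<longleftrightarrow> s < C * (eps - x0) / (eta * (x - eps))"
        using eta xe by (simp add: pos_less_divide_eq)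
      finally show ?thesis .
    qed
    have "(\<integral>\<^sup>+g. of_bool (x0 + eta * ((cmod g)\<^sup>2 / C) * (x - eps) < eps \<and> x > eps) \<partial>CN01) =
          (\<integral>\<^sup>+g. of_bool ((cmod g)\<^sup>2 < C * (eps - x0) / (eta * (x - eps))) \<partial>CN01)"
      using xe by (intro nn_integral_cong) (simp only: iff simp_thms)
    also have "\<dots> = ennreal (1 - exp (- (C * (eps - x0) / (eta * (x - eps)))))"
      by (rule CN_lt) (use eta C xe x0 in simp)
    finally show ?thesis using xe x0 by simp
  qed
qed

definition KB :: "real \<Rightarrow> real" where "KB A = 2 * sqrt A * bessel_K1 (2 * sqrt A)"

lemma KB_bounds: "0 \<le> A \<Longrightarrow> 0 \<le> KB A \<and> KB A \<le> 1"
  using bessel_key(1,2)[of A] by (cases "A = 0") (auto simp: KB_def)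

lemma inner_h:
  assumes eta: "0 < eta" and C: "0 < C" and B: "0 < B" and e: "0 < eps" and x0: "x0 < eps"
  shows "(\<integral>\<^sup>+h. of_bool ((cmod h)\<^sup>2 / B > eps \<and> x0 < eps) * ennreal (1 - exp (- (C * (eps - x0) / (eta * ((cmod h)\<^sup>2 / B - eps))))) \<partial>CN01)
       = ennreal (exp (- B * eps) * (1 - KB (C * B * (eps - x0) / eta)))"
proof -
  define A where "A = C * B * (eps - x0) / eta"
  have A: "A > 0" unfolding A_def using eta C B x0 by simp
  have "(\<integral>\<^sup>+h. of_bool ((cmod h)\<^sup>2 / B > eps \<and> x0 < eps) * ennreal (1 - exp (- (C * (eps - x0) / (eta * ((cmod h)\<^sup>2 / B - eps))))) \<partial>CN01)
     = (\<integral>\<^sup>+s. of_bool (s / B > eps \<and> x0 < eps) * ennreal (1 - exp (- (C * (eps - x0) / (eta * (s / B - eps))))) * ennreal (exp (- s)) * indicator {0..} s \<partial>lborel)"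
    by (rule CN_radial[where f="\<lambda>s. of_bool (s / B > eps \<and> x0 < eps) * ennreal (1 - exp (- (C * (eps - x0) / (eta * (s / B - eps)))))"]) measurable
  also have "\<dots> = (\<integral>\<^sup>+s. indicator {B * eps<..} s * ennreal (exp (- s) * (1 - exp (- (A / (s - B * eps))))) \<partial>lborel)"
  proof (rule nn_integral_cong)
    fix s :: real
    show "of_bool (s / B > eps \<and> x0 < eps) * ennreal (1 - exp (- (C * (eps - x0) / (eta * (s / B - eps))))) * ennreal (exp (- s)) * indicator {0..} s
        = indicator {B * eps<..} s * ennreal (exp (- s) * (1 - exp (- (A / (s - B * eps)))))"
    proof (cases "s > B * eps")
      case True
      then have s0: "s \<ge> 0" using B e by (smt (verit) mult_pos_pos)
      have sb: "s / B > eps" using True B by (simp add: pos_less_divide_eq mult.commute)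
      have q: "C * (eps - x0) / (eta * (s / B - eps)) = A / (s - B * eps)"
        unfolding A_def using B eta True by (simp add: field_simps)
      have nn: "0 \<le> 1 - exp (- (A / (s - B * eps)))" using A True by simp
      show ?thesis using True s0 sb x0 nn by (simp add: q ennreal_mult mult.commute)
    next
      case False
      then have "\<not> s / B > eps" using B by (simp add: pos_less_divide_eq mult.commute)
      then show ?thesis using False by simp
    qed
  qed
  also have "\<dots> = (\<integral>\<^sup>+u. indicator {B * eps<..} (B * eps + u) * ennreal (exp (- (B * eps + u)) * (1 - exp (- (A / ((B * eps + u) - B * eps))))) \<partial>lborel)"
    using nn_integral_real_affine[where t="B * eps" and c=1 and f="\<lambda>s. indicator {B * eps<..} s * ennreal (exp (- s) * (1 - exp (- (A / (s - B * eps)))))"]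
    by simp
  also have "\<dots> = (\<integral>\<^sup>+u. ennreal (exp (- B * eps)) * (ennreal (exp (- u) * (1 - exp (- (A / u)))) * indicator {0<..} u) \<partial>lborel)"
  proof (rule nn_integral_cong)
    fix u :: real
    have "exp (- (B * eps + u)) = exp (- B * eps) * exp (- u)" by (simp add: exp_add[symmetric])
    moreover have "0 \<le> 1 - exp (- (A / u))" if "u > 0" using A that by simp
    ultimately show "indicator {B * eps<..} (B * eps + u) * ennreal (exp (- (B * eps + u)) * (1 - exp (- (A / ((B * eps + u) - B * eps))))) =
          ennreal (exp (- B * eps)) * (ennreal (exp (- u) * (1 - exp (- (A / u)))) * indicator {0<..} u)"
      by (auto simp: indicator_def ennreal_mult mult_ac)
  qed
  also have "\<dots> = ennreal (exp (- B * eps)) * (\<integral>\<^sup>+u. ennreal (exp (- u) * (1 - exp (- (A / u)))) * indicator {0<..} u \<partial>lborel)"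
    by (rule nn_integral_cmult) measurable
  also have "\<dots> = ennreal (exp (- B * eps)) * ennreal (1 - KB A)"
    using bessel_key(3)[OF A] by (simp add: KB_def)
  also have "\<dots> = ennreal (exp (- B * eps) * (1 - KB A))"
    using KB_bounds[of A] A by (simp add: ennreal_mult)
  finally show ?thesis unfolding A_def .
qed

lemma LBINT0_bounds:
  fixes f :: "real \<Rightarrow> real"
  assumes b: "0 \<le> b" and [measurable]: "f \<in> borel_measurable borel"
    and nn: "\<And>x. x \<in> {0..b} \<Longrightarrow> 0 \<le> f x" and bd: "\<And>x. x \<in> {0..b} \<Longrightarrow> f x \<le> M"
  shows "0 \<le> (LBINT x=0..ereal b. f x)" "(LBINT x=0..ereal b. f x) \<le> M * b"
proof -
  have M: "0 \<le> M" if "b > 0" using nn[of 0] bd[of 0] that by auto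
  have e: "ennreal (LBINT x=0..ereal b. f x) = (\<integral>\<^sup>+x. ennreal (f x) * indicator {0..b} x \<partial>lborel)"
    by (rule ennreal_LBINT0[OF b _ nn bd]) auto
  have "(\<integral>\<^sup>+x. ennreal (f x) * indicator {0..b} x \<partial>lborel) \<le> (\<integral>\<^sup>+x. ennreal M * indicator {0..b} x \<partial>lborel)"
    by (intro nn_integral_mono) (auto simp: indicator_def intro!: ennreal_leI bd)
  also have "\<dots> = ennreal M * ennreal b" using b by (simp add: nn_integral_cmult_indicator)
  finally have le: "ennreal (LBINT x=0..ereal b. f x) \<le> ennreal (M * b)"
    unfolding e using b by (cases "b > 0") (auto simp: ennreal_mult M)
  have "(LBINT x=0..ereal b. f x) = (LBINT x:{0..b}. f x)" by (rule LBINT0_Icc[OF b])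
  also have "\<dots> \<ge> 0" unfolding set_lebesgue_integral_def
    by (rule integral_nonneg_AE) (auto simp: indicator_def nn)
  finally show "0 \<le> (LBINT x=0..ereal b. f x)" .
  then show "(LBINT x=0..ereal b. f x) \<le> M * b"
    using le b by (cases "b > 0") (auto simp: M ennreal_le_iff)
qed


lemma triple:
  fixes J :: "real \<times> real \<times> real \<Rightarrow> real" and f0 :: "real \<Rightarrow> real"
  assumes MJ[measurable]: "J \<in> borel_measurable borel" and Mf[measurable]: "f0 \<in> borel_measurable borel"
    and e: "0 \<le> e" and R: "0 \<le> R"
    and J01: "\<And>x r t. x \<in> {0..e} \<Longrightarrow> 0 \<le> J (x, r, t) \<and> J (x, r, t) \<le> 1"
    and f01: "\<And>x. x \<in> {0..e} \<Longrightarrow> 0 \<le> f0 x \<and> f0 x \<le> F"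
  shows "ennreal (LBINT x=0..ereal e. (LBINT r=0..ereal R. (LBINT t=0..ereal (2*pi). J (x, r, t) * r)) * f0 x) =
    (\<integral>\<^sup>+r. indicator {0<..R} r * ennreal r * (\<integral>\<^sup>+t. indicator {0..2*pi} t *
        (\<integral>\<^sup>+x. ennreal (f0 x) * (of_bool (x < e) * ennreal (J (x, r, t))) * indicator {0..} x \<partial>lborel) \<partial>lborel) \<partial>lborel)"
proof -
  define I1 where "I1 x r = (LBINT t=0..ereal (2*pi). J (x, r, t) * r)" for x r
  define I2 where "I2 x = (LBINT r=0..ereal R. I1 x r)" for x
  have [measurable]: "(\<lambda>(x, r). I1 x r) \<in> borel_measurable (borel \<Otimes>\<^sub>M borel)"
    unfolding I1_def by (simp add: LBINT0_Icc set_lebesgue_integral_def split_beta') measurable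
  have [measurable]: "I2 \<in> borel_measurable borel"
    unfolding I2_def by (simp add: LBINT0_Icc R set_lebesgue_integral_def) measurable
  have E1: "ennreal (I1 x r) = (\<integral>\<^sup>+t. ennreal (J (x, r, t) * r) * indicator {0..2*pi} t \<partial>lborel)"
    and B1: "0 \<le> I1 x r \<and> I1 x r \<le> R * (2 * pi)"
    if "x \<in> {0..e}" "r \<in> {0..R}" for x r
  proof -
    have nn: "0 \<le> J (x, r, t) * r" for t using J01[OF that(1)] that(2) by simp
    have bd: "J (x, r, t) * r \<le> R" for t
    proof -
      have "J (x, r, t) * r \<le> 1 * r" by (rule mult_right_mono) (use J01[OF that(1)] that(2) in auto)
      then show ?thesis using that(2) by simp
    qed
    show "ennreal (I1 x r) = (\<integral>\<^sup>+t. ennreal (J (x, r, t) * r) * indicator {0..2*pi} t \<partial>lborel)"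
      unfolding I1_def by (rule ennreal_LBINT0[OF _ _ nn bd]) auto
    show "0 \<le> I1 x r \<and> I1 x r \<le> R * (2 * pi)"
      unfolding I1_def using LBINT0_bounds[of "2*pi" "\<lambda>t. J (x, r, t) * r" R, OF _ _ nn bd] by auto
  qed
  have E2: "ennreal (I2 x) = (\<integral>\<^sup>+r. ennreal (I1 x r) * indicator {0..R} r \<partial>lborel)"
    and B2: "0 \<le> I2 x \<and> I2 x \<le> R * (2 * pi) * R"
    if "x \<in> {0..e}" for x
  proof -
    show "ennreal (I2 x) = (\<integral>\<^sup>+r. ennreal (I1 x r) * indicator {0..R} r \<partial>lborel)"
      unfolding I2_def by (rule ennreal_LBINT0[OF R, of _ "R * (2 * pi)"]) (use B1 that in auto)
    show "0 \<le> I2 x \<and> I2 x \<le> R * (2 * pi) * R"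
      unfolding I2_def using LBINT0_bounds[OF R, of "I1 x" "R * (2 * pi)"] B1 that by auto
  qed
  have "ennreal (LBINT x=0..ereal e. I2 x * f0 x) = (\<integral>\<^sup>+x. ennreal (I2 x * f0 x) * indicator {0..e} x \<partial>lborel)"
    by (rule ennreal_LBINT0[OF e, of _ "R * (2 * pi) * R * F"])
       (use B2 f01 R in \<open>auto intro!: mult_mono\<close>)
  also have "\<dots> = (\<integral>\<^sup>+x. (\<integral>\<^sup>+r. (\<integral>\<^sup>+t. ennreal (f0 x) * indicator {0..e} x * indicator {0..R} r * indicator {0..2*pi} t * ennreal (J (x, r, t) * r) \<partial>lborel) \<partial>lborel) \<partial>lborel)"
  proof (rule nn_integral_cong)
    fix x :: real
    show "ennreal (I2 x * f0 x) * indicator {0..e} x = (\<integral>\<^sup>+r. (\<integral>\<^sup>+t. ennreal (f0 x) * indicator {0..e} x * indicator {0..R} r * indicator {0..2*pi} t * ennreal (J (x, r, t) * r) \<partial>lborel) \<partial>lborel)"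
    proof (cases "x \<in> {0..e}")
      case False
      then have "indicator {0..e} x = (0::ennreal)" by simp
      then show ?thesis by simp
    next
      case x: True
      have "ennreal (I2 x * f0 x) * indicator {0..e} x = ennreal (f0 x) * ennreal (I2 x)"
        using x B2[OF x] f01[OF x] by (simp add: ennreal_mult mult.commute)
      also have "\<dots> = ennreal (f0 x) * (\<integral>\<^sup>+r. ennreal (I1 x r) * indicator {0..R} r \<partial>lborel)" by (simp add: E2[OF x])
      also have "\<dots> = ennreal (f0 x) * (\<integral>\<^sup>+r. indicator {0..R} r * (\<integral>\<^sup>+t. ennreal (J (x, r, t) * r) * indicator {0..2*pi} t \<partial>lborel) \<partial>lborel)"
      proof -
        have "(\<integral>\<^sup>+r. ennreal (I1 x r) * indicator {0..R} r \<partial>lborel) = (\<integral>\<^sup>+r. indicator {0..R} r * (\<integral>\<^sup>+t. ennreal (J (x, r, t) * r) * indicator {0..2*pi} t \<partial>lborel) \<partial>lborel)"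
        proof (rule nn_integral_cong)
          fix r :: real
          show "ennreal (I1 x r) * indicator {0..R} r = indicator {0..R} r * (\<integral>\<^sup>+t. ennreal (J (x, r, t) * r) * indicator {0..2*pi} t \<partial>lborel)"
            by (cases "r \<in> {0..R}") (simp_all add: E1[OF x])
        qed
        then show ?thesis by simp
      qed
      also have "\<dots> = (\<integral>\<^sup>+r. (\<integral>\<^sup>+t. ennreal (f0 x) * indicator {0..e} x * indicator {0..R} r * indicator {0..2*pi} t * ennreal (J (x, r, t) * r) \<partial>lborel) \<partial>lborel)"
        using x by (subst nn_integral_cmult[symmetric]; (intro nn_integral_cong)?; auto simp: nn_integral_cmult[symmetric] mult_ac)
      finally show ?thesis .
    qed
  qed
  also have "\<dots> = (\<integral>\<^sup>+r. (\<integral>\<^sup>+x. (\<integral>\<^sup>+t. ennreal (f0 x) * indicator {0..e} x * indicator {0..R} r * indicator {0..2*pi} t * ennreal (J (x, r, t) * r) \<partial>lborel) \<partial>lborel) \<partial>lborel)"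
    by (rule lborel_pair.Fubini') measurable
  also have "\<dots> = (\<integral>\<^sup>+r. (\<integral>\<^sup>+t. (\<integral>\<^sup>+x. ennreal (f0 x) * indicator {0..e} x * indicator {0..R} r * indicator {0..2*pi} t * ennreal (J (x, r, t) * r) \<partial>lborel) \<partial>lborel) \<partial>lborel)"
    by (intro nn_integral_cong lborel_pair.Fubini') measurable
  also have "\<dots> = (\<integral>\<^sup>+r. indicator {0<..R} r * ennreal r * (\<integral>\<^sup>+t. indicator {0..2*pi} t *
        (\<integral>\<^sup>+x. ennreal (f0 x) * (of_bool (x < e) * ennreal (J (x, r, t))) * indicator {0..} x \<partial>lborel) \<partial>lborel) \<partial>lborel)"
  proof (rule nn_integral_cong)
    fix r :: real
    show "(\<integral>\<^sup>+t. (\<integral>\<^sup>+x. ennreal (f0 x) * indicator {0..e} x * indicator {0..R} r * indicator {0..2*pi} t * ennreal (J (x, r, t) * r) \<partial>lborel) \<partial>lborel) =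
      indicator {0<..R} r * ennreal r * (\<integral>\<^sup>+t. indicator {0..2*pi} t *
        (\<integral>\<^sup>+x. ennreal (f0 x) * (of_bool (x < e) * ennreal (J (x, r, t))) * indicator {0..} x \<partial>lborel) \<partial>lborel)"
    proof (cases "r \<in> {0<..R}")
      case False
      then have "r \<notin> {0..R} \<or> r = 0" by auto
      then have z: "ennreal (f0 x) * indicator {0..e} x * indicator {0..R} r * indicator {0..2*pi} t * ennreal (J (x, r, t) * r) = 0" for x t
        by auto
      show ?thesis using False by (simp add: z)
    next
      case r: True
      have inner: "(\<integral>\<^sup>+x. ennreal (f0 x) * indicator {0..e} x * indicator {0..R} r * indicator {0..2*pi} t * ennreal (J (x, r, t) * r) \<partial>lborel)
          = ennreal r * (indicator {0..2*pi} t * (\<integral>\<^sup>+x. ennreal (f0 x) * (of_bool (x < e) * ennreal (J (x, r, t))) * indicator {0..} x \<partial>lborel))" for t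
      proof -
        have "ennreal r * (indicator {0..2*pi} t * (\<integral>\<^sup>+x. ennreal (f0 x) * (of_bool (x < e) * ennreal (J (x, r, t))) * indicator {0..} x \<partial>lborel))
            = (\<integral>\<^sup>+x. ennreal r * (indicator {0..2*pi} t * (ennreal (f0 x) * (of_bool (x < e) * ennreal (J (x, r, t))) * indicator {0..} x)) \<partial>lborel)"
          by (simp add: nn_integral_cmult)
        also have "\<dots> = (\<integral>\<^sup>+x. ennreal (f0 x) * indicator {0..e} x * indicator {0..R} r * indicator {0..2*pi} t * ennreal (J (x, r, t) * r) \<partial>lborel)"
        proof (rule nn_integral_cong_AE)
          show "AE x in lborel. ennreal r * (indicator {0..2*pi} t * (ennreal (f0 x) * (of_bool (x < e) * ennreal (J (x, r, t))) * indicator {0..} x)) =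
              ennreal (f0 x) * indicator {0..e} x * indicator {0..R} r * indicator {0..2*pi} t * ennreal (J (x, r, t) * r)"
            using AE_lborel_singleton[of e]
          proof eventually_elim
            case (elim x)
            show ?case
            proof (cases "x \<in> {0..e}")
              case True
              then have "0 \<le> J (x, r, t)" using J01 by blast
              then show ?thesis using True r elim by (auto simp: indicator_def ennreal_mult mult_ac)
            next
              case False
              then show ?thesis using r by (auto simp: indicator_def)
            qed
          qed
        qed
        finally show ?thesis ..
      qed
      have "(\<integral>\<^sup>+t. (\<integral>\<^sup>+x. ennreal (f0 x) * indicator {0..e} x * indicator {0..R} r * indicator {0..2*pi} t * ennreal (J (x, r, t) * r) \<partial>lborel) \<partial>lborel)
         = (\<integral>\<^sup>+t. ennreal r * (indicator {0..2*pi} t * (\<integral>\<^sup>+x. ennreal (f0 x) * (of_bool (x < e) * ennreal (J (x, r, t))) * indicator {0..} x \<partial>lborel)) \<partial>lborel)"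
        by (simp only: inner)
      also have "\<dots> = ennreal r * (\<integral>\<^sup>+t. indicator {0..2*pi} t * (\<integral>\<^sup>+x. ennreal (f0 x) * (of_bool (x < e) * ennreal (J (x, r, t))) * indicator {0..} x \<partial>lborel) \<partial>lborel)"
        by (rule nn_integral_cmult) measurable
      finally show ?thesis using r by simp
    qed
  qed
  finally show ?thesis unfolding I2_def I1_def .
qed

lemma inner_a:
  fixes G :: "real \<Rightarrow> ennreal"
  assumes rho: "rho > 0" and [measurable]: "G \<in> borel_measurable borel"
  shows "(\<integral>\<^sup>+a. G ((cmod a)\<^sup>2 / rho) \<partial>CN01) = (\<integral>\<^sup>+x. ennreal (rho * exp (- rho * x)) * G x * indicator {0..} x \<partial>lborel)"
proof -
  have "(\<integral>\<^sup>+a. G ((cmod a)\<^sup>2 / rho) \<partial>CN01) = (\<integral>\<^sup>+s. G (s / rho) * ennreal (exp (- s)) * indicator {0..} s \<partial>lborel)"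
    by (rule CN_radial[where f="\<lambda>s. G (s / rho)"]) measurable
  also have "\<dots> = ennreal \<bar>rho\<bar> * (\<integral>\<^sup>+x. G ((0 + rho * x) / rho) * ennreal (exp (- (0 + rho * x))) * indicator {0..} (0 + rho * x) \<partial>lborel)"
    by (rule nn_integral_real_affine) (use rho in auto)
  also have "\<dots> = ennreal rho * (\<integral>\<^sup>+x. G x * ennreal (exp (- rho * x)) * indicator {0..} x \<partial>lborel)"
    using rho by (auto intro!: arg_cong2[where f="(*)"] nn_integral_cong simp: indicator_def zero_le_mult_iff)
  also have "\<dots> = (\<integral>\<^sup>+x. ennreal rho * (G x * ennreal (exp (- rho * x)) * indicator {0..} x) \<partial>lborel)"
    by (rule nn_integral_cmult[symmetric]) measurable
  also have "\<dots> = (\<integral>\<^sup>+x. ennreal (rho * exp (- rho * x)) * G x * indicator {0..} x \<partial>lborel)"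
    using rho by (intro nn_integral_cong) (simp add: ennreal_mult mult_ac)
  finally show ?thesis .
qed


lemma inner_hg:
  assumes eta: "0 < eta" and C: "0 < C" and B: "0 < B" and e: "0 < eps"
  shows "(\<integral>\<^sup>+h. \<integral>\<^sup>+g. of_bool (x0 + eta * ((cmod g)\<^sup>2 / C) * ((cmod h)\<^sup>2 / B - eps) < eps \<and> (cmod h)\<^sup>2 / B > eps) \<partial>CN01 \<partial>CN01)
     = of_bool (x0 < eps) * ennreal (exp (- B * eps) * (1 - KB (C * B * (eps - x0) / eta)))"
proof -
  have "(\<integral>\<^sup>+h. \<integral>\<^sup>+g. of_bool (x0 + eta * ((cmod g)\<^sup>2 / C) * ((cmod h)\<^sup>2 / B - eps) < eps \<and> (cmod h)\<^sup>2 / B > eps) \<partial>CN01 \<partial>CN01)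
     = (\<integral>\<^sup>+h. of_bool ((cmod h)\<^sup>2 / B > eps \<and> x0 < eps) * ennreal (1 - exp (- (C * (eps - x0) / (eta * ((cmod h)\<^sup>2 / B - eps))))) \<partial>CN01)"
    by (intro nn_integral_cong inner_g eta C)
  also have "\<dots> = of_bool (x0 < eps) * ennreal (exp (- B * eps) * (1 - KB (C * B * (eps - x0) / eta)))"
  proof (cases "x0 < eps")
    case True
    then show ?thesis using inner_h[OF eta C B e True] by simp
  next
    case False
    then show ?thesis by simp
  qed
  finally show ?thesis .
qed

lemma cmod_dist_powr:
  "cmod (Complex (r * cos t) (r * sin t) - complex_of_real d) powr alpha = (r\<^sup>2 + d\<^sup>2 - 2 * r * d * cos t) powr (alpha / 2)"
proof -
  have eq: "(r * cos t - d)\<^sup>2 + (r * sin t)\<^sup>2 = r\<^sup>2 + d\<^sup>2 - 2 * r * d * cos t"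
  proof -
    have s2: "(sin t)\<^sup>2 = 1 - (cos t)\<^sup>2" by (rule sin_squared_eq)
    show ?thesis by (simp add: power_mult_distrib s2 power2_diff algebra_simps)
  qed
  have nn: "0 \<le> r\<^sup>2 + d\<^sup>2 - 2 * r * d * cos t" using eq[symmetric] by simp
  have "cmod (Complex (r * cos t) (r * sin t) - complex_of_real d) = sqrt (r\<^sup>2 + d\<^sup>2 - 2 * r * d * cos t)"
    by (simp add: cmod_def eq[symmetric])
  also have "\<dots> = (r\<^sup>2 + d\<^sup>2 - 2 * r * d * cos t) powr (1/2)" using nn by (simp add: powr_half_sqrt)
  finally show ?thesis by (simp add: powr_powr)
qed

lemma E2_iter:
  assumes mu: "mu > 0" and R: "R > 0" and d: "d > 0" and alpha: "alpha > 0" and eta: "eta > 0" and e: "eps > 0"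
  shows "(\<integral>\<^sup>+n. \<integral>\<^sup>+w. \<integral>\<^sup>+a. \<integral>\<^sup>+h. \<integral>\<^sup>+g. indicator {t. case t of (n, w, a, h, g) \<Rightarrow>
            ((cmod a)\<^sup>2 / (1 + d powr alpha) + eta * ((cmod g)\<^sup>2 / (1 + cmod (w - complex_of_real d) powr alpha)) * ((cmod h)\<^sup>2 / (1 + cmod w powr alpha) - eps) < eps
              \<and> (cmod h)\<^sup>2 / (1 + cmod w powr alpha) > eps) \<and> 1 \<le> n} (n, w, a, h, g)
          \<partial>CN01 \<partial>CN01 \<partial>CN01 \<partial>unif_disc R \<partial>measure_pmf (poisson_pmf mu))
     = ennreal (1 - exp (- mu)) * (ennreal (1 / (pi * R\<^sup>2)) *
        (\<integral>\<^sup>+r. indicator {0<..R} r * ennreal r * (\<integral>\<^sup>+t. indicator {0..2*pi} t *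
        (\<integral>\<^sup>+x. ennreal ((1 + d powr alpha) * exp (- (1 + d powr alpha) * x)) *
            (of_bool (x < eps) * ennreal (exp (- (1 + r powr alpha) * eps) *
               (1 - KB ((1 + (r\<^sup>2 + d\<^sup>2 - 2 * r * d * cos t) powr (alpha / 2)) * (1 + r powr alpha) * (eps - x) / eta))))
          * indicator {0..} x \<partial>lborel) \<partial>lborel) \<partial>lborel))"
  (is "?L = ennreal _ * ?Rr")
proof -
  define rho where "rho = 1 + d powr alpha"
  have rho: "rho > 0" unfolding rho_def by (simp add: add_pos_nonneg)
  define Bw where "Bw w = 1 + cmod w powr alpha" for w :: complex
  define Cw where "Cw w = 1 + cmod (w - complex_of_real d) powr alpha" for w :: complex
  have Bw: "Bw w > 0" for w unfolding Bw_def by (simp add: add_pos_nonneg)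
  have Cw: "Cw w > 0" for w unfolding Cw_def by (simp add: add_pos_nonneg)
  have [measurable]: "Bw \<in> borel_measurable borel" "Cw \<in> borel_measurable borel"
    unfolding Bw_def[abs_def] Cw_def[abs_def] by measurable
  define Hf where "Hf w x = of_bool (x < eps) * ennreal (exp (- Bw w * eps) * (1 - KB (Cw w * Bw w * (eps - x) / eta)))" for w x
  have KBm[measurable]: "KB \<in> borel_measurable borel" unfolding KB_def[abs_def] by measurable
  have [measurable]: "(\<lambda>(w, x). Hf w x) \<in> borel_measurable (borel \<Otimes>\<^sub>M borel)"
    unfolding Hf_def split_beta' by measurable
  define Iw where "Iw = (\<integral>\<^sup>+w. \<integral>\<^sup>+a. \<integral>\<^sup>+h. \<integral>\<^sup>+g. of_bool ((cmod a)\<^sup>2 / rho + eta * ((cmod g)\<^sup>2 / Cw w) * ((cmod h)\<^sup>2 / Bw w - eps) < eps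
              \<and> (cmod h)\<^sup>2 / Bw w > eps) \<partial>CN01 \<partial>CN01 \<partial>CN01 \<partial>unif_disc R)"
  have "?L = (\<integral>\<^sup>+n. of_bool (1 \<le> n) * Iw \<partial>measure_pmf (poisson_pmf mu))"
  proof (rule nn_integral_cong)
    fix n :: nat
    show "(\<integral>\<^sup>+w. \<integral>\<^sup>+a. \<integral>\<^sup>+h. \<integral>\<^sup>+g. indicator {t. case t of (n, w, a, h, g) \<Rightarrow>
            ((cmod a)\<^sup>2 / (1 + d powr alpha) + eta * ((cmod g)\<^sup>2 / (1 + cmod (w - complex_of_real d) powr alpha)) * ((cmod h)\<^sup>2 / (1 + cmod w powr alpha) - eps) < eps
              \<and> (cmod h)\<^sup>2 / (1 + cmod w powr alpha) > eps) \<and> 1 \<le> n} (n, w, a, h, g)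
          \<partial>CN01 \<partial>CN01 \<partial>CN01 \<partial>unif_disc R) = of_bool (1 \<le> n) * Iw"
      by (cases "1 \<le> n") (simp_all add: Iw_def rho_def Bw_def Cw_def indicator_def disc_const R)
  qed
  also have "\<dots> = ennreal (1 - exp (- mu)) * Iw" by (rule pmf_ind1[OF mu])
  also have "Iw = (\<integral>\<^sup>+w. \<integral>\<^sup>+a. Hf w ((cmod a)\<^sup>2 / rho) \<partial>CN01 \<partial>unif_disc R)"
    unfolding Iw_def Hf_def
    by (intro nn_integral_cong inner_hg eta Cw Bw e)
  also have "\<dots> = (\<integral>\<^sup>+w. \<integral>\<^sup>+x. ennreal (rho * exp (- rho * x)) * Hf w x * indicator {0..} x \<partial>lborel \<partial>unif_disc R)"
    by (intro nn_integral_cong inner_a rho) measurable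
  also have "\<dots> = ennreal (1 / (pi * R\<^sup>2)) * (\<integral>\<^sup>+r. indicator {0<..R} r * ennreal r * (\<integral>\<^sup>+t. indicator {0..2*pi} t *
        (\<integral>\<^sup>+x. ennreal (rho * exp (- rho * x)) * Hf (Complex (r * cos t) (r * sin t)) x * indicator {0..} x \<partial>lborel) \<partial>lborel) \<partial>lborel)"
    by (rule disc_polar[OF _ R]) measurable
  also have "\<dots> = ?Rr"
  proof -
    have pt: "Hf (Complex (r * cos t) (r * sin t)) x = of_bool (x < eps) * ennreal (exp (- (1 + r powr alpha) * eps) *
               (1 - KB ((1 + (r\<^sup>2 + d\<^sup>2 - 2 * r * d * cos t) powr (alpha / 2)) * (1 + r powr alpha) * (eps - x) / eta)))"
      if "r > 0" for r t x
      using that by (simp add: Hf_def Bw_def Cw_def cmod_polar cmod_dist_powr)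
    have "(\<integral>\<^sup>+r. indicator {0<..R} r * ennreal r * (\<integral>\<^sup>+t. indicator {0..2*pi} t *
        (\<integral>\<^sup>+x. ennreal (rho * exp (- rho * x)) * Hf (Complex (r * cos t) (r * sin t)) x * indicator {0..} x \<partial>lborel) \<partial>lborel) \<partial>lborel)
      = (\<integral>\<^sup>+r. indicator {0<..R} r * ennreal r * (\<integral>\<^sup>+t. indicator {0..2*pi} t *
        (\<integral>\<^sup>+x. ennreal ((1 + d powr alpha) * exp (- (1 + d powr alpha) * x)) *
            (of_bool (x < eps) * ennreal (exp (- (1 + r powr alpha) * eps) *
               (1 - KB ((1 + (r\<^sup>2 + d\<^sup>2 - 2 * r * d * cos t) powr (alpha / 2)) * (1 + r powr alpha) * (eps - x) / eta))))
          * indicator {0..} x \<partial>lborel) \<partial>lborel) \<partial>lborel)"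
    proof (rule nn_integral_cong)
      fix r :: real
      show "indicator {0<..R} r * ennreal r * (\<integral>\<^sup>+t. indicator {0..2*pi} t *
        (\<integral>\<^sup>+x. ennreal (rho * exp (- rho * x)) * Hf (Complex (r * cos t) (r * sin t)) x * indicator {0..} x \<partial>lborel) \<partial>lborel) =
        indicator {0<..R} r * ennreal r * (\<integral>\<^sup>+t. indicator {0..2*pi} t *
        (\<integral>\<^sup>+x. ennreal ((1 + d powr alpha) * exp (- (1 + d powr alpha) * x)) *
            (of_bool (x < eps) * ennreal (exp (- (1 + r powr alpha) * eps) *
               (1 - KB ((1 + (r\<^sup>2 + d\<^sup>2 - 2 * r * d * cos t) powr (alpha / 2)) * (1 + r powr alpha) * (eps - x) / eta))))
          * indicator {0..} x \<partial>lborel) \<partial>lborel)"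
      proof (cases "r > 0")
        case True
        then show ?thesis by (simp only: pt rho_def)
      next
        case False
        then show ?thesis by simp
      qed
    qed
    then show ?thesis by simp
  qed
  finally show ?thesis .
qed

lemma emeasure_CN01_UNIV[simp]: "emeasure CN01 UNIV = 1"
  using prob_space.emeasure_space_1[OF prob_space_CN01] by simp

lemma emeasure_disc_UNIV: "R > 0 \<Longrightarrow> emeasure (unif_disc R) UNIV = 1"
  using prob_space.emeasure_space_1[OF prob_space_unif_disc] by simp

lemma CN_lt_div:
  assumes "c > 0" "0 \<le> e"
  shows "(\<integral>\<^sup>+a. of_bool ((cmod a)\<^sup>2 / c < e) \<partial>CN01) = ennreal (1 - exp (- c * e))"
proof -
  have "(\<integral>\<^sup>+a. of_bool ((cmod a)\<^sup>2 / c < e) \<partial>CN01) = (\<integral>\<^sup>+a. of_bool ((cmod a)\<^sup>2 < c * e) \<partial>CN01)"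
    using assms by (intro nn_integral_cong) (simp add: pos_divide_less_eq mult.commute)
  also have "\<dots> = ennreal (1 - exp (- (c * e)))" by (rule CN_lt) (use assms in simp)
  finally show ?thesis by simp
qed

lemma E1_iter:
  assumes mu: "mu > 0" and R: "R > 0" and d: "d > 0" and e: "eps > 0"
  shows "(\<integral>\<^sup>+n. \<integral>\<^sup>+w. \<integral>\<^sup>+a. \<integral>\<^sup>+h. \<integral>\<^sup>+g. indicator {t. case t of (n, w, a, h, g) \<Rightarrow>
            n = 0 \<and> (cmod a)\<^sup>2 / (1 + d powr alpha) < eps} (n, w, a, h, g)
          \<partial>CN01 \<partial>CN01 \<partial>CN01 \<partial>unif_disc R \<partial>measure_pmf (poisson_pmf mu))
     = ennreal (exp (- mu)) * ennreal (1 - exp (- (1 + d powr alpha) * eps))"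
proof -
  have rho: "1 + d powr alpha > 0" by (simp add: add_pos_nonneg)
  have "(\<integral>\<^sup>+n. \<integral>\<^sup>+w. \<integral>\<^sup>+a. \<integral>\<^sup>+h. \<integral>\<^sup>+g. indicator {t. case t of (n, w, a, h, g) \<Rightarrow>
            n = 0 \<and> (cmod a)\<^sup>2 / (1 + d powr alpha) < eps} (n, w, a, h, g)
          \<partial>CN01 \<partial>CN01 \<partial>CN01 \<partial>unif_disc R \<partial>measure_pmf (poisson_pmf mu))
      = (\<integral>\<^sup>+n. of_bool (n = 0) * ennreal (1 - exp (- (1 + d powr alpha) * eps)) \<partial>measure_pmf (poisson_pmf mu))"
  proof (rule nn_integral_cong)
    fix n :: nat
    show "(\<integral>\<^sup>+w. \<integral>\<^sup>+a. \<integral>\<^sup>+h. \<integral>\<^sup>+g. indicator {t. case t of (n, w, a, h, g) \<Rightarrow>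
            n = 0 \<and> (cmod a)\<^sup>2 / (1 + d powr alpha) < eps} (n, w, a, h, g)
          \<partial>CN01 \<partial>CN01 \<partial>CN01 \<partial>unif_disc R) = of_bool (n = 0) * ennreal (1 - exp (- (1 + d powr alpha) * eps))"
      by (cases "n = 0") (simp_all add: indicator_def disc_const R CN_lt_div[OF rho] e less_imp_le emeasure_disc_UNIV)
  qed
  also have "\<dots> = ennreal (exp (- mu)) * ennreal (1 - exp (- (1 + d powr alpha) * eps))"
    by (rule pmf_ind0[OF mu])
  finally show ?thesis .
qed

lemma E3_iter:
  assumes mu: "mu > 0" and R: "R > 0" and d: "d > 0" and e: "eps > 0"
  shows "(\<integral>\<^sup>+n. \<integral>\<^sup>+w. \<integral>\<^sup>+a. \<integral>\<^sup>+h. \<integral>\<^sup>+g. indicator {t. case t of (n, w, a, h, g) \<Rightarrow>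
            (cmod a)\<^sup>2 / (1 + d powr alpha) < eps \<and> (cmod h)\<^sup>2 / (1 + cmod w powr alpha) < eps \<and> 1 \<le> n} (n, w, a, h, g)
          \<partial>CN01 \<partial>CN01 \<partial>CN01 \<partial>unif_disc R \<partial>measure_pmf (poisson_pmf mu))
     = ennreal (1 - exp (- mu)) * (ennreal (1 - exp (- (1 + d powr alpha) * eps)) * (ennreal (1 / (pi * R\<^sup>2)) *
        (\<integral>\<^sup>+r. indicator {0<..R} r * ennreal r * (\<integral>\<^sup>+t. indicator {0..2*pi} t * ennreal (1 - exp (- (1 + r powr alpha) * eps)) \<partial>lborel) \<partial>lborel)))"
proof -
  have rho: "1 + d powr alpha > 0" by (simp add: add_pos_nonneg)
  have Bw: "1 + cmod w powr alpha > 0" for w :: complex by (simp add: add_pos_nonneg)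
  define Iw where "Iw = (\<integral>\<^sup>+w. ennreal (1 - exp (- (1 + d powr alpha) * eps)) * ennreal (1 - exp (- (1 + cmod w powr alpha) * eps)) \<partial>unif_disc R)"
  have "(\<integral>\<^sup>+n. \<integral>\<^sup>+w. \<integral>\<^sup>+a. \<integral>\<^sup>+h. \<integral>\<^sup>+g. indicator {t. case t of (n, w, a, h, g) \<Rightarrow>
            (cmod a)\<^sup>2 / (1 + d powr alpha) < eps \<and> (cmod h)\<^sup>2 / (1 + cmod w powr alpha) < eps \<and> 1 \<le> n} (n, w, a, h, g)
          \<partial>CN01 \<partial>CN01 \<partial>CN01 \<partial>unif_disc R \<partial>measure_pmf (poisson_pmf mu))
      = (\<integral>\<^sup>+n. of_bool (1 \<le> n) * Iw \<partial>measure_pmf (poisson_pmf mu))"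
  proof (rule nn_integral_cong)
    fix n :: nat
    have "(\<integral>\<^sup>+a. \<integral>\<^sup>+h. of_bool ((cmod a)\<^sup>2 / (1 + d powr alpha) < eps \<and> (cmod h)\<^sup>2 / (1 + cmod w powr alpha) < eps) \<partial>CN01 \<partial>CN01)
       = ennreal (1 - exp (- (1 + d powr alpha) * eps)) * ennreal (1 - exp (- (1 + cmod w powr alpha) * eps))" for w
    proof -
      have "(\<integral>\<^sup>+a. \<integral>\<^sup>+h. of_bool ((cmod a)\<^sup>2 / (1 + d powr alpha) < eps \<and> (cmod h)\<^sup>2 / (1 + cmod w powr alpha) < eps) \<partial>CN01 \<partial>CN01)
          = (\<integral>\<^sup>+a. of_bool ((cmod a)\<^sup>2 / (1 + d powr alpha) < eps) * ennreal (1 - exp (- (1 + cmod w powr alpha) * eps)) \<partial>CN01)"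
        by (intro nn_integral_cong) (simp add: CN_lt_div[OF Bw] e less_imp_le)
      also have "\<dots> = ennreal (1 - exp (- (1 + d powr alpha) * eps)) * ennreal (1 - exp (- (1 + cmod w powr alpha) * eps))"
        by (subst nn_integral_multc) (auto simp: CN_lt_div[OF rho] e less_imp_le)
      finally show ?thesis .
    qed
    then show "(\<integral>\<^sup>+w. \<integral>\<^sup>+a. \<integral>\<^sup>+h. \<integral>\<^sup>+g. indicator {t. case t of (n, w, a, h, g) \<Rightarrow>
            (cmod a)\<^sup>2 / (1 + d powr alpha) < eps \<and> (cmod h)\<^sup>2 / (1 + cmod w powr alpha) < eps \<and> 1 \<le> n} (n, w, a, h, g)
          \<partial>CN01 \<partial>CN01 \<partial>CN01 \<partial>unif_disc R) = of_bool (1 \<le> n) * Iw"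
      by (cases "1 \<le> n") (simp_all add: indicator_def disc_const R Iw_def emeasure_disc_UNIV)
  qed
  also have "\<dots> = ennreal (1 - exp (- mu)) * Iw" by (rule pmf_ind1[OF mu])
  also have "Iw = ennreal (1 - exp (- (1 + d powr alpha) * eps)) * (\<integral>\<^sup>+w. ennreal (1 - exp (- (1 + cmod w powr alpha) * eps)) \<partial>unif_disc R)"
    unfolding Iw_def by (rule nn_integral_cmult) measurable
  also have "(\<integral>\<^sup>+w. ennreal (1 - exp (- (1 + cmod w powr alpha) * eps)) \<partial>unif_disc R) =
     ennreal (1 / (pi * R\<^sup>2)) * (\<integral>\<^sup>+r. indicator {0<..R} r * ennreal r * (\<integral>\<^sup>+t. indicator {0..2*pi} t * ennreal (1 - exp (- (1 + cmod (Complex (r * cos t) (r * sin t)) powr alpha) * eps)) \<partial>lborel) \<partial>lborel)"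
    by (rule disc_polar[OF _ R]) measurable
  also have "(\<integral>\<^sup>+r. indicator {0<..R} r * ennreal r * (\<integral>\<^sup>+t. indicator {0..2*pi} t * ennreal (1 - exp (- (1 + cmod (Complex (r * cos t) (r * sin t)) powr alpha) * eps)) \<partial>lborel) \<partial>lborel)
      = (\<integral>\<^sup>+r. indicator {0<..R} r * ennreal r * (\<integral>\<^sup>+t. indicator {0..2*pi} t * ennreal (1 - exp (- (1 + r powr alpha) * eps)) \<partial>lborel) \<partial>lborel)"
    by (rule nn_integral_cong) (auto simp: cmod_polar indicator_def)
  finally show ?thesis .
qed

lemma LBINT0_nonneg:
  fixes f :: "real \<Rightarrow> real"
  assumes "0 \<le> b" "\<And>x. x \<in> {0..b} \<Longrightarrow> 0 \<le> f x"
  shows "0 \<le> (LBINT x=0..ereal b. f x)"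
  unfolding LBINT0_Icc[OF assms(1)] set_lebesgue_integral_def
  by (rule integral_nonneg_AE) (use assms(2) in \<open>auto simp: indicator_def\<close>)

theorem theorem1:
  fixes M :: "'s measure"
    and N :: "'s \<Rightarrow> nat" and V :: "'s \<Rightarrow> real" and Z :: "'s \<Rightarrow> nat \<Rightarrow> complex"
    and hd :: "'s \<Rightarrow> complex" and h g :: "'s \<Rightarrow> nat \<Rightarrow> complex"
    and d lam RD alpha Pw Rt eta tau eps :: real
    and I :: "'s \<Rightarrow> nat" and x0 xi yi :: "'s \<Rightarrow> real"
    and f0 :: "real \<Rightarrow> real" and q :: "real \<Rightarrow> real \<Rightarrow> real \<Rightarrow> real"
  assumes "prob_space M"
    and "0 < d" and "0 < lam" and "0 < RD" and "0 < alpha" and "0 < Pw" and "0 < Rt"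
    and "0 < eta" and "eta \<le> 1"
    and "(\<lambda>\<omega>. (N \<omega>, V \<omega>, Z \<omega>, hd \<omega>, h \<omega>, g \<omega>)) \<in> M \<rightarrow>\<^sub>M relay_model (pi * RD\<^sup>2 * lam) RD"
    and "distr M (relay_model (pi * RD\<^sup>2 * lam) RD) (\<lambda>\<omega>. (N \<omega>, V \<omega>, Z \<omega>, hd \<omega>, h \<omega>, g \<omega>))
           = relay_model (pi * RD\<^sup>2 * lam) RD"
    and "tau = 2 powr (2 * Rt) - 1"
    and "eps = tau / Pw"
    and "I = (\<lambda>\<omega>. nat \<lfloor>V \<omega> * real (N \<omega>)\<rfloor>)"
    and "x0 = (\<lambda>\<omega>. (cmod (hd \<omega>))\<^sup>2 / (1 + d powr alpha))"
    and "xi = (\<lambda>\<omega>. (cmod (h \<omega> (I \<omega>)))\<^sup>2 / (1 + cmod (Z \<omega> (I \<omega>)) powr alpha))"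
    and "yi = (\<lambda>\<omega>. (cmod (g \<omega> (I \<omega>)))\<^sup>2 / (1 + cmod (Z \<omega> (I \<omega>) - complex_of_real d) powr alpha))"
    and "f0 = (\<lambda>x::real. (1 + d powr alpha) * exp (- (1 + d powr alpha) * x))"
    and "q = (\<lambda>x r \<theta>::real. sqrt ((1 + (r\<^sup>2 + d\<^sup>2 - 2 * r * d * cos \<theta>) powr (alpha / 2))
                                   * (1 + r powr alpha) * (eps - x) / eta))"
  shows "measure M {\<omega> \<in> space M. N \<omega> = 0 \<and> x0 \<omega> < eps}
         + measure M {\<omega> \<in> space M. 1 \<le> N \<omega>}
           * cond_prob M (\<lambda>\<omega>. x0 \<omega> + eta * yi \<omega> * (xi \<omega> - eps) < eps \<and> xi \<omega> > eps)
                         (\<lambda>\<omega>. 1 \<le> N \<omega>)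
         + measure M {\<omega> \<in> space M. x0 \<omega> < eps \<and> xi \<omega> < eps \<and> 1 \<le> N \<omega>}
       = (1 - exp (- (1 + d powr alpha) * eps)) * exp (- pi * RD\<^sup>2 * lam)
         + (1 - exp (- pi * RD\<^sup>2 * lam)) / (pi * RD\<^sup>2)
           * (LBINT x=0..eps. (LBINT r=0..RD. (LBINT \<theta>=0..2*pi.
                 exp (- (1 + r powr alpha) * eps)
                 * (1 - 2 * q x r \<theta> * bessel_K1 (2 * q x r \<theta>)) * r)) * f0 x)
         + 2 * (1 - exp (- pi * RD\<^sup>2 * lam)) / RD\<^sup>2
           * (LBINT r=0..RD. (1 - exp (- (1 + d powr alpha) * eps))
                             * (1 - exp (- (1 + r powr alpha) * eps)) * r)"
proof -
  note A = assms
  have pM: "prob_space M" by fact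
  interpret M: prob_space M by (rule pM)
  define mu where "mu = pi * RD\<^sup>2 * lam"
  have mu: "mu > 0" unfolding mu_def using assms by simp
  define RM where "RM = relay_model mu RD"
  define X where "X = (\<lambda>\<omega>. (N \<omega>, V \<omega>, Z \<omega>, hd \<omega>, h \<omega>, g \<omega>))"
  have XM: "X \<in> M \<rightarrow>\<^sub>M RM" unfolding X_def RM_def mu_def using assms(10) .
  have XD: "distr M RM X = RM" unfolding X_def RM_def mu_def using assms(11) .
  have e: "eps > 0"
  proof -
    have "(2::real) powr 0 < 2 powr (2 * Rt)" by (rule powr_less_mono) (use assms(7) in auto)
    then have "2 powr (2 * Rt) > 1" by simp
    then show ?thesis using assms(12,13,6) by simp
  qed
  have d: "d > 0" "alpha > 0" "eta > 0" "RD > 0" using assms by auto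
  have TX: "Tmap (X \<omega>) = (N \<omega>, Z \<omega> (I \<omega>), hd \<omega>, h \<omega> (I \<omega>), g \<omega> (I \<omega>))" for \<omega>
    unfolding Tmap_def X_def assms(14) by simp
  have meas_eq: "measure M {\<omega> \<in> space M. \<Phi> (Tmap (X \<omega>))} =
      enn2real (\<integral>\<^sup>+n. \<integral>\<^sup>+w. \<integral>\<^sup>+a. \<integral>\<^sup>+h. \<integral>\<^sup>+g. indicator {t. \<Phi> t} (n, w, a, h, g) \<partial>CN01 \<partial>CN01 \<partial>CN01 \<partial>unif_disc RD \<partial>measure_pmf (poisson_pmf mu))"
    if M\<Phi>: "Measurable.pred (count_space UNIV \<Otimes>\<^sub>M (borel \<Otimes>\<^sub>M (borel \<Otimes>\<^sub>M (borel \<Otimes>\<^sub>M borel)))) \<Phi>" for \<Phi>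
  proof -
    have "measure M {\<omega> \<in> space M. \<Phi> (Tmap (X \<omega>))} = measure RM {x \<in> space RM. \<Phi> (Tmap x)}"
      by (rule transport[OF XM XD]) (unfold RM_def, rule RED_set(1)[OF mu d(4) M\<Phi>])
    also have "\<dots> = enn2real (emeasure RM {x \<in> space RM. \<Phi> (Tmap x)})" by (simp add: measure_def)
    also have "\<dots> = enn2real (\<integral>\<^sup>+n. \<integral>\<^sup>+w. \<integral>\<^sup>+a. \<integral>\<^sup>+h. \<integral>\<^sup>+g. indicator {t. \<Phi> t} (n, w, a, h, g) \<partial>CN01 \<partial>CN01 \<partial>CN01 \<partial>unif_disc RD \<partial>measure_pmf (poisson_pmf mu))"
      unfolding RM_def by (subst RED_set(2)[OF mu d(4) M\<Phi>]) (rule refl)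
    finally show ?thesis .
  qed
  define \<Phi>1 where "\<Phi>1 = (\<lambda>t::nat \<times> complex \<times> complex \<times> complex \<times> complex. case t of (n, w, a, h, g) \<Rightarrow>
            n = 0 \<and> (cmod a)\<^sup>2 / (1 + d powr alpha) < eps)"
  define \<Phi>2 where "\<Phi>2 = (\<lambda>t::nat \<times> complex \<times> complex \<times> complex \<times> complex. case t of (n, w, a, h, g) \<Rightarrow>
            ((cmod a)\<^sup>2 / (1 + d powr alpha) + eta * ((cmod g)\<^sup>2 / (1 + cmod (w - complex_of_real d) powr alpha)) * ((cmod h)\<^sup>2 / (1 + cmod w powr alpha) - eps) < eps
              \<and> (cmod h)\<^sup>2 / (1 + cmod w powr alpha) > eps) \<and> 1 \<le> n)"
  define \<Phi>3 where "\<Phi>3 = (\<lambda>t::nat \<times> complex \<times> complex \<times> complex \<times> complex. case t of (n, w, a, h, g) \<Rightarrow>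
            (cmod a)\<^sup>2 / (1 + d powr alpha) < eps \<and> (cmod h)\<^sup>2 / (1 + cmod w powr alpha) < eps \<and> 1 \<le> n)"
  have M1: "Measurable.pred (count_space UNIV \<Otimes>\<^sub>M (borel \<Otimes>\<^sub>M (borel \<Otimes>\<^sub>M (borel \<Otimes>\<^sub>M borel)))) \<Phi>1"
    unfolding \<Phi>1_def by measurable
  have M2: "Measurable.pred (count_space UNIV \<Otimes>\<^sub>M (borel \<Otimes>\<^sub>M (borel \<Otimes>\<^sub>M (borel \<Otimes>\<^sub>M borel)))) \<Phi>2"
    unfolding \<Phi>2_def by measurable
  have M3: "Measurable.pred (count_space UNIV \<Otimes>\<^sub>M (borel \<Otimes>\<^sub>M (borel \<Otimes>\<^sub>M (borel \<Otimes>\<^sub>M borel)))) \<Phi>3"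
    unfolding \<Phi>3_def by measurable
  have S1: "{\<omega> \<in> space M. N \<omega> = 0 \<and> x0 \<omega> < eps} = {\<omega> \<in> space M. \<Phi>1 (Tmap (X \<omega>))}"
    unfolding \<Phi>1_def TX assms(15) by simp
  have S2: "{\<omega> \<in> space M. (x0 \<omega> + eta * yi \<omega> * (xi \<omega> - eps) < eps \<and> xi \<omega> > eps) \<and> 1 \<le> N \<omega>} = {\<omega> \<in> space M. \<Phi>2 (Tmap (X \<omega>))}"
    unfolding \<Phi>2_def TX assms(15,16,17) by simp
  have S3: "{\<omega> \<in> space M. x0 \<omega> < eps \<and> xi \<omega> < eps \<and> 1 \<le> N \<omega>} = {\<omega> \<in> space M. \<Phi>3 (Tmap (X \<omega>))}"
    unfolding \<Phi>3_def TX assms(15,16) by simp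
  have rho: "1 + d powr alpha > 0" by (simp add: add_pos_nonneg)
  have c0: "0 \<le> 1 - exp (- (1 + d powr alpha) * eps)"
  proof -
    have "0 \<le> (1 + d powr alpha) * eps" using rho e by simp
    then have "- (1 + d powr alpha) * eps \<le> 0" by (simp only: mult_minus_left neg_le_0_iff_le)
    then show ?thesis by simp
  qed
  have m1: "measure M {\<omega> \<in> space M. N \<omega> = 0 \<and> x0 \<omega> < eps} = (1 - exp (- (1 + d powr alpha) * eps)) * exp (- pi * RD\<^sup>2 * lam)"
  proof -
    have "measure M {\<omega> \<in> space M. N \<omega> = 0 \<and> x0 \<omega> < eps} = enn2real (ennreal (exp (- mu)) * ennreal (1 - exp (- (1 + d powr alpha) * eps)))"
      unfolding S1 meas_eq[OF M1] unfolding \<Phi>1_def by (subst E1_iter[OF mu d(4) d(1) e]) (rule refl)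
    also have "\<dots> = exp (- mu) * (1 - exp (- (1 + d powr alpha) * eps))"
      using c0 by (simp add: enn2real_mult)
    finally show ?thesis by (simp add: mu_def mult.commute)
  qed
  define ef where "ef r = 1 - exp (- (1 + r powr alpha) * eps)" for r
  have ef01: "0 \<le> ef r \<and> ef r \<le> 1" for r
  proof -
    have "0 \<le> (1 + r powr alpha) * eps" using e by (simp add: add_nonneg_nonneg)
    then have "- (1 + r powr alpha) * eps \<le> 0" by (simp only: mult_minus_left neg_le_0_iff_le)
    then show ?thesis unfolding ef_def by simp
  qed
  have [measurable]: "ef \<in> borel_measurable borel" unfolding ef_def[abs_def] by measurable
  define LB where "LB = (LBINT r=0..ereal RD. ef r * r)"
  have fb: "0 \<le> ef r * r \<and> ef r * r \<le> RD" if "r \<in> {0..RD}" for r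
  proof -
    have "ef r * r \<le> 1 * r" by (rule mult_right_mono) (use ef01[of r] that in auto)
    then show ?thesis using ef01[of r] that by auto
  qed
  have LBe: "ennreal LB = (\<integral>\<^sup>+r. ennreal (ef r * r) * indicator {0..RD} r \<partial>lborel)"
    unfolding LB_def by (rule ennreal_LBINT0) (use d(4) fb in auto)
  have LB0: "0 \<le> LB" unfolding LB_def by (rule LBINT0_nonneg) (use d(4) fb in auto)
  have RHS3: "(LBINT r=0..ereal RD. (1 - exp (- (1 + d powr alpha) * eps)) * (1 - exp (- (1 + r powr alpha) * eps)) * r)
      = ef d * LB"
  proof -
    have c0': "0 \<le> ef d" "ef d \<le> 1" using ef01[of d] by auto
    have "ennreal (LBINT r=0..ereal RD. ef d * (ef r * r))
        = (\<integral>\<^sup>+r. ennreal (ef d * (ef r * r)) * indicator {0..RD} r \<partial>lborel)"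
    proof (rule ennreal_LBINT0[of _ _ RD])
      fix r assume r: "r \<in> {0..RD}"
      have "ef d * (ef r * r) \<le> 1 * (ef r * r)" by (rule mult_right_mono) (use c0' fb[OF r] in auto)
      then show "ef d * (ef r * r) \<le> RD" using fb[OF r] by linarith
      show "0 \<le> ef d * (ef r * r)" using c0' fb[OF r] by simp
    qed (use d(4) in auto)
    also have "\<dots> = ennreal (ef d) * (\<integral>\<^sup>+r. ennreal (ef r * r) * indicator {0..RD} r \<partial>lborel)"
    proof (subst nn_integral_cmult[symmetric])
      show "(\<integral>\<^sup>+r. ennreal (ef d * (ef r * r)) * indicator {0..RD} r \<partial>lborel) =
            (\<integral>\<^sup>+r. ennreal (ef d) * (ennreal (ef r * r) * indicator {0..RD} r) \<partial>lborel)"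
      proof (rule nn_integral_cong)
        fix r :: real
        show "ennreal (ef d * (ef r * r)) * indicator {0..RD} r = ennreal (ef d) * (ennreal (ef r * r) * indicator {0..RD} r)"
        proof (cases "r \<in> {0..RD}")
          case True
          then have "0 \<le> ef r * r" using fb by blast
          then show ?thesis using True c0' by (simp add: ennreal_mult)
        qed simp
      qed
    qed measurable
    also have "\<dots> = ennreal (ef d * LB)" using c0' LB0 by (simp add: LBe ennreal_mult)
    finally have "ennreal (LBINT r=0..ereal RD. ef d * (ef r * r)) = ennreal (ef d * LB)" .
    moreover have "0 \<le> (LBINT r=0..ereal RD. ef d * (ef r * r))"
      by (rule LBINT0_nonneg) (use d(4) fb c0' in auto)
    ultimately have "(LBINT r=0..ereal RD. ef d * (ef r * r)) = ef d * LB" using c0' LB0 by simp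
    then show ?thesis unfolding ef_def by (simp add: mult.assoc)
  qed
  have emu: "0 \<le> 1 - exp (- mu)" using mu by simp
  have m3: "measure M {\<omega> \<in> space M. x0 \<omega> < eps \<and> xi \<omega> < eps \<and> 1 \<le> N \<omega>} =
      2 * (1 - exp (- pi * RD\<^sup>2 * lam)) / RD\<^sup>2 *
           (LBINT r=0..RD. (1 - exp (- (1 + d powr alpha) * eps)) * (1 - exp (- (1 + r powr alpha) * eps)) * r)"
  proof -
    have Nr: "(\<integral>\<^sup>+r. indicator {0<..RD} r * ennreal r * (\<integral>\<^sup>+t. indicator {0..2*pi} t * ennreal (1 - exp (- (1 + r powr alpha) * eps)) \<partial>lborel) \<partial>lborel)
        = ennreal (2 * pi) * ennreal LB"
    proof -
      have "(\<integral>\<^sup>+r. indicator {0<..RD} r * ennreal r * (\<integral>\<^sup>+t. indicator {0..2*pi} t * ennreal (1 - exp (- (1 + r powr alpha) * eps)) \<partial>lborel) \<partial>lborel)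
         = (\<integral>\<^sup>+r. ennreal (2 * pi) * (ennreal (ef r * r) * indicator {0..RD} r) \<partial>lborel)"
      proof (rule nn_integral_cong)
        fix r :: real
        have "(\<integral>\<^sup>+t. indicator {0..2*pi} t * ennreal (1 - exp (- (1 + r powr alpha) * eps)) \<partial>lborel) = ennreal (ef r) * ennreal (2 * pi)"
          by (subst mult.commute) (simp add: nn_integral_cmult_indicator ef_def)
        moreover have "indicator {0<..RD} r * ennreal r * (ennreal (ef r) * ennreal (2 * pi)) = ennreal (2 * pi) * (ennreal (ef r * r) * indicator {0..RD} r)"
        proof (cases "r \<in> {0<..RD}")
          case True
          then show ?thesis using ef01[of r] by (simp add: ennreal_mult mult_ac)
        next
          case False
          then have "r \<notin> {0..RD} \<or> r = 0" by auto
          then show ?thesis using False by auto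
        qed
        ultimately show "indicator {0<..RD} r * ennreal r * (\<integral>\<^sup>+t. indicator {0..2*pi} t * ennreal (1 - exp (- (1 + r powr alpha) * eps)) \<partial>lborel) = ennreal (2 * pi) * (ennreal (ef r * r) * indicator {0..RD} r)"
          by simp
      qed
      also have "\<dots> = ennreal (2 * pi) * (\<integral>\<^sup>+r. ennreal (ef r * r) * indicator {0..RD} r \<partial>lborel)"
        by (rule nn_integral_cmult) measurable
      finally show ?thesis by (simp add: LBe)
    qed
    have "measure M {\<omega> \<in> space M. x0 \<omega> < eps \<and> xi \<omega> < eps \<and> 1 \<le> N \<omega>} =
       enn2real (ennreal (1 - exp (- mu)) * (ennreal (ef d) * (ennreal (1 / (pi * RD\<^sup>2)) * (ennreal (2 * pi) * ennreal LB))))"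
      unfolding S3 meas_eq[OF M3] unfolding \<Phi>3_def
      by (subst E3_iter[OF mu d(4) d(1) e]) (simp only: Nr ef_def)
    also have "\<dots> = (1 - exp (- mu)) * (ef d * (1 / (pi * RD\<^sup>2) * (2 * pi * LB)))"
      using emu ef01[of d] LB0 by (simp add: enn2real_mult)
    also have "\<dots> = 2 * (1 - exp (- pi * RD\<^sup>2 * lam)) / RD\<^sup>2 * (ef d * LB)"
      using d(4) by (simp add: mu_def field_simps)
    finally show ?thesis by (simp only: RHS3)
  qed
  have mQ: "measure M {\<omega> \<in> space M. 1 \<le> N \<omega>} = 1 - exp (- mu)"
  proof -
    define \<Phi>0 where "\<Phi>0 = (\<lambda>t::nat \<times> complex \<times> complex \<times> complex \<times> complex. 1 \<le> fst t)"
    have M0: "Measurable.pred (count_space UNIV \<Otimes>\<^sub>M (borel \<Otimes>\<^sub>M (borel \<Otimes>\<^sub>M (borel \<Otimes>\<^sub>M borel)))) \<Phi>0"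
      unfolding \<Phi>0_def by measurable
    have "{\<omega> \<in> space M. 1 \<le> N \<omega>} = {\<omega> \<in> space M. \<Phi>0 (Tmap (X \<omega>))}" unfolding \<Phi>0_def TX by simp
    then have "measure M {\<omega> \<in> space M. 1 \<le> N \<omega>} = enn2real (\<integral>\<^sup>+n. \<integral>\<^sup>+w. \<integral>\<^sup>+a. \<integral>\<^sup>+h. \<integral>\<^sup>+g. indicator {t. \<Phi>0 t} (n, w, a, h, g) \<partial>CN01 \<partial>CN01 \<partial>CN01 \<partial>unif_disc RD \<partial>measure_pmf (poisson_pmf mu))"
      using meas_eq[OF M0] by simp
    also have "(\<integral>\<^sup>+n. \<integral>\<^sup>+w. \<integral>\<^sup>+a. \<integral>\<^sup>+h. \<integral>\<^sup>+g. indicator {t. \<Phi>0 t} (n, w, a, h, g) \<partial>CN01 \<partial>CN01 \<partial>CN01 \<partial>unif_disc RD \<partial>measure_pmf (poisson_pmf mu))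
        = (\<integral>\<^sup>+n. of_bool (1 \<le> n) * 1 \<partial>measure_pmf (poisson_pmf mu))"
    proof (rule nn_integral_cong)
      fix n :: nat
      show "(\<integral>\<^sup>+w. \<integral>\<^sup>+a. \<integral>\<^sup>+h. \<integral>\<^sup>+g. indicator {t. \<Phi>0 t} (n, w, a, h, g) \<partial>CN01 \<partial>CN01 \<partial>CN01 \<partial>unif_disc RD) = of_bool (1 \<le> n) * 1"
        by (cases "1 \<le> n") (simp_all add: \<Phi>0_def indicator_def disc_const d(4) emeasure_disc_UNIV)
    qed
    also have "\<dots> = ennreal (1 - exp (- mu)) * 1" by (rule pmf_ind1[OF mu])
    finally show ?thesis using emu by simp
  qed
  define J where "J = (\<lambda>(x, r, t). exp (- (1 + r powr alpha) * eps) * (1 - 2 * q x r t * bessel_K1 (2 * q x r t)))"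
  have Jq: "J (x, r, t) = exp (- (1 + r powr alpha) * eps) *
      (1 - KB ((1 + (r\<^sup>2 + d\<^sup>2 - 2 * r * d * cos t) powr (alpha / 2)) * (1 + r powr alpha) * (eps - x) / eta))" for x r t
    unfolding J_def KB_def assms(19) by simp
  have MJ': "J \<in> borel_measurable (borel \<Otimes>\<^sub>M (borel \<Otimes>\<^sub>M borel))"
    unfolding J_def assms(19) by measurable
  have MJ: "J \<in> borel_measurable borel"
    using MJ' by (simp add: borel_prod)
  have f0m: "f0 \<in> borel_measurable borel" unfolding assms(18) by measurable
  have J01: "0 \<le> J (x, r, t) \<and> J (x, r, t) \<le> 1" if "x \<in> {0..eps}" for x r t
  proof -
    define Aa where "Aa = (1 + (r\<^sup>2 + d\<^sup>2 - 2 * r * d * cos t) powr (alpha / 2)) * (1 + r powr alpha) * (eps - x) / eta"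
    have "0 \<le> Aa" unfolding Aa_def using that d(3) by (auto intro!: divide_nonneg_pos mult_nonneg_nonneg add_nonneg_nonneg)
    then have K: "0 \<le> KB Aa \<and> KB Aa \<le> 1" by (rule KB_bounds)
    have "0 \<le> (1 + r powr alpha) * eps" using e by (simp add: add_nonneg_nonneg)
    then have "- (1 + r powr alpha) * eps \<le> 0" by (simp only: mult_minus_left neg_le_0_iff_le)
    then have E: "exp (- (1 + r powr alpha) * eps) \<le> 1" by simp
    have "exp (- (1 + r powr alpha) * eps) * (1 - KB Aa) \<le> 1 * 1"
      by (rule mult_mono) (use E K in auto)
    then show ?thesis using K unfolding Jq Aa_def[symmetric] by simp
  qed
  have f01: "0 \<le> f0 x \<and> f0 x \<le> 1 + d powr alpha" if "x \<in> {0..eps}" for x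
  proof -
    have "0 \<le> (1 + d powr alpha) * x" using that rho by simp
    then have "- (1 + d powr alpha) * x \<le> 0" by (simp only: mult_minus_left neg_le_0_iff_le)
    then have E: "exp (- (1 + d powr alpha) * x) \<le> 1" by simp
    have "(1 + d powr alpha) * exp (- (1 + d powr alpha) * x) \<le> (1 + d powr alpha) * 1"
      by (rule mult_left_mono) (use E rho in auto)
    then show ?thesis unfolding assms(18) using rho by simp
  qed
  define Lt where "Lt = (LBINT x=0..ereal eps. (LBINT r=0..ereal RD. (LBINT t=0..ereal (2*pi). J (x, r, t) * r)) * f0 x)"
  have Lt: "ennreal Lt = (\<integral>\<^sup>+r. indicator {0<..RD} r * ennreal r * (\<integral>\<^sup>+t. indicator {0..2*pi} t *
        (\<integral>\<^sup>+x. ennreal (f0 x) * (of_bool (x < eps) * ennreal (J (x, r, t))) * indicator {0..} x \<partial>lborel) \<partial>lborel) \<partial>lborel)"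
    unfolding Lt_def by (rule triple[OF MJ f0m _ _ J01 f01]) (use e d(4) in auto)
  have Lt0: "0 \<le> Lt" unfolding Lt_def
  proof (rule LBINT0_nonneg)
    fix x assume x: "x \<in> {0..eps}"
    have "0 \<le> (LBINT r=0..ereal RD. (LBINT t=0..ereal (2*pi). J (x, r, t) * r))"
    proof (rule LBINT0_nonneg)
      fix r assume r: "r \<in> {0..RD}"
      show "0 \<le> (LBINT t=0..ereal (2*pi). J (x, r, t) * r)"
        by (rule LBINT0_nonneg) (use J01[OF x] r in auto)
    qed (use d(4) in auto)
    then show "0 \<le> (LBINT r=0..ereal RD. (LBINT t=0..ereal (2*pi). J (x, r, t) * r)) * f0 x"
      using f01[OF x] by simp
  qed (use e in auto)
  have m2: "measure M {\<omega> \<in> space M. (x0 \<omega> + eta * yi \<omega> * (xi \<omega> - eps) < eps \<and> xi \<omega> > eps) \<and> 1 \<le> N \<omega>} =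
       (1 - exp (- mu)) * (1 / (pi * RD\<^sup>2) * Lt)"
  proof -
    have "measure M {\<omega> \<in> space M. (x0 \<omega> + eta * yi \<omega> * (xi \<omega> - eps) < eps \<and> xi \<omega> > eps) \<and> 1 \<le> N \<omega>}
       = enn2real (ennreal (1 - exp (- mu)) * (ennreal (1 / (pi * RD\<^sup>2)) * ennreal Lt))"
      unfolding S2 meas_eq[OF M2] unfolding \<Phi>2_def
      by (subst E2_iter[OF mu d(4) d(1) d(2) d(3) e]) (simp only: Lt Jq assms(18))
    also have "\<dots> = (1 - exp (- mu)) * (1 / (pi * RD\<^sup>2) * Lt)"
      using emu Lt0 by (simp add: enn2real_mult)
    finally show ?thesis .
  qed
  have Lt_eq: "Lt = (LBINT x=0..eps. (LBINT r=0..RD. (LBINT \<theta>=0..2*pi.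
                 exp (- (1 + r powr alpha) * eps)
                 * (1 - 2 * q x r \<theta> * bessel_K1 (2 * q x r \<theta>)) * r)) * f0 x)"
    unfolding Lt_def J_def by simp
  have mupos: "1 - exp (- mu) > 0" using mu by simp
  have mid: "measure M {\<omega> \<in> space M. 1 \<le> N \<omega>}
           * cond_prob M (\<lambda>\<omega>. x0 \<omega> + eta * yi \<omega> * (xi \<omega> - eps) < eps \<and> xi \<omega> > eps)
                         (\<lambda>\<omega>. 1 \<le> N \<omega>) = (1 - exp (- pi * RD\<^sup>2 * lam)) / (pi * RD\<^sup>2) * Lt"
  proof -
    have "measure M {\<omega> \<in> space M. 1 \<le> N \<omega>}
           * cond_prob M (\<lambda>\<omega>. x0 \<omega> + eta * yi \<omega> * (xi \<omega> - eps) < eps \<and> xi \<omega> > eps)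
                         (\<lambda>\<omega>. 1 \<le> N \<omega>) = (1 - exp (- mu)) * (((1 - exp (- mu)) * (1 / (pi * RD\<^sup>2) * Lt)) / (1 - exp (- mu)))"
      unfolding cond_prob_def mQ m2 by simp
    also have "\<dots> = (1 - exp (- mu)) * (1 / (pi * RD\<^sup>2) * Lt)" using mupos by simp
    also have "\<dots> = (1 - exp (- pi * RD\<^sup>2 * lam)) / (pi * RD\<^sup>2) * Lt" by (simp add: mu_def)
    finally show ?thesis .
  qed
  show ?thesis unfolding m1 m3 mid Lt_eq ..
qed

end
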